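(* There exist a common knowledge debate game, a common knowledge distinguishing debate game, and a private information distinguishing debate game each of which has the following property: the minimum error over all policies is strictly less than the minimum error over policies $M$ whose image is contained in $\{0,1\}$.
   Context: Let $\delta$ be a special default action. CKDG: a tuple $(A_1,A_2,S,P,C_1,C_2,u)$ consisting of finite sets $A_i\not\ni\delta$, a finite set $S$, a probability mass function $P$ on $S$, maps $C_i:S\to\mathcal P(A_i)$, and $u:\{1,2\}\times S\to\mathbb R$. A policy is $M:\{1,2\}\times(A_1\cup\{\delta\})\times(A_2\cup\{\delta\})\to[0,1]$ with $M(1,\cdot,\cdot)+M(2,\cdot,\cdot)=1$. $w^i_M(s)$ is the value to agent $i$ of the zero-sum game with payoff matrix $M(i,\cdot,\cdot)$, with agent 1 restricted to $C_1(s)\cup\{\delta\}$ and agent 2 to $C_2(s)\cup\{\delta\}$. The error is $\mathbb E_{s\sim P}[\,|u(1,s)-u(2,s)|w^1_M(s)$ if $u(1,s)\le u(2,s)$, else $|u(1,s)-u(2,s)|w^2_M(s)\,]$. CKDDG: a tuple $(A,S,P,C_w,C_l)$ with $A$ finite, $\delta\notin A$, $S$ finite, $P$ a probability mass function on $S$, and $C_w,C_l:S\to\mathcal P(A)$. Policies and error are those of the induced CKDG $(A,A,\{1,2\}\times S,P',C'_1,C'_2,u')$, where: - $P'((i,s))=P(s)/2$; - $C'_j((i,s))=C_w(s)$ if $i=j$, else $C_l(s)$; - $u'(j,(i,s))=[i=j]$. PIDDG: a tuple of the same form as a CKDDG. A policy is $M:\{1,2\}\times(A\cup\{\delta\})^2\to[0,1]$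 with $M(1,\cdot,\cdot)+M(2,\cdot,\cdot)=1$. $G_1(B,M)$ is the following Bayesian game. Each agent has action set $A\cup\{\delta\}$. A scenario $s\sim P$ is drawn, and agent 1's type (set of available non-default actions) is $C_w(s)$ while agent 2's is $C_l(s)$. Payoffs are as follows: - if both agents play available actions, agent $i$ gets $M(i,a_1,a_2)$; - if exactly one plays an unavailable action, it gets $0$ and the other gets $1$; - if both play unavailable actions, each gets $1/2$. $G_2(B,M)$ swaps the types. The PIDDG error is $\frac{v_1(G_2(B,M))+v_2(G_1(B,M))}{2}$, where $v_i$ is the value of the zero-sum Bayesian game to agent $i$. Minimum errors over the relevant (compact) policy sets exist. *)

theory Defs
  imports Complex_Main
begin

text \<open>Encoding: an action set A (not containing the default action) over type 'a
  is a set of type 'a set; the extended action set A \<union> {default} is the set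
  insert None (Some ` A) of type 'a option set, the default action being None.
  Agents are numbered 1 and 2.\<close>

definition ext_actions :: "'a set \<Rightarrow> 'a option set" where
  "ext_actions A = insert None (Some ` A)"

definition is_pmf_on :: "'s set \<Rightarrow> ('s \<Rightarrow> real) \<Rightarrow> bool" where
  "is_pmf_on S P \<longleftrightarrow> finite S \<and> (\<forall>s\<in>S. 0 \<le> P s) \<and> sum P S = 1"

definition mixed :: "'x set \<Rightarrow> ('x \<Rightarrow> real) set" where
  "mixed X = {p. (\<forall>x\<in>X. 0 \<le> p x) \<and> sum p X = 1}"

definition mat_value :: "'x set \<Rightarrow> 'y set \<Rightarrow> ('x \<Rightarrow> 'y \<Rightarrow> real) \<Rightarrow> real" where
  "mat_value R C f =
     (SUP p \<in> mixed R. INF q \<in> mixed C. \<Sum>x\<in>R. \<Sum>y\<in>C. p x * q y * f x y)"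

definition is_ckdg ::
  "'a set \<Rightarrow> 'b set \<Rightarrow> 's set \<Rightarrow> ('s \<Rightarrow> real) \<Rightarrow> ('s \<Rightarrow> 'a set) \<Rightarrow> ('s \<Rightarrow> 'b set)
   \<Rightarrow> (nat \<Rightarrow> 's \<Rightarrow> real) \<Rightarrow> bool" where
  "is_ckdg A1 A2 S P C1 C2 u \<longleftrightarrow>
     finite A1 \<and> finite A2 \<and> finite S \<and> is_pmf_on S P \<and>
     (\<forall>s\<in>S. C1 s \<subseteq> A1 \<and> C2 s \<subseteq> A2)"

definition policies :: "'a set \<Rightarrow> 'b set \<Rightarrow> (nat \<Rightarrow> 'a option \<Rightarrow> 'b option \<Rightarrow> real) set" where
  "policies A1 A2 = {M.
     (\<forall>i\<in>{1,2}. \<forall>x\<in>ext_actions A1. \<forall>y\<in>ext_actions A2. 0 \<le> M i x y \<and> M i x y \<le> 1) \<and>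
     (\<forall>x\<in>ext_actions A1. \<forall>y\<in>ext_actions A2. M 1 x y + M 2 x y = 1) \<and>
     (\<forall>i x y. \<not> (i \<in> {1,2} \<and> x \<in> ext_actions A1 \<and> y \<in> ext_actions A2) \<longrightarrow> M i x y = 0)}"

definition det_policies :: "'a set \<Rightarrow> 'b set \<Rightarrow> (nat \<Rightarrow> 'a option \<Rightarrow> 'b option \<Rightarrow> real) set" where
  "det_policies A1 A2 = {M \<in> policies A1 A2. \<forall>i x y. M i x y \<in> {0,1}}"

definition ckdg_w ::
  "('s \<Rightarrow> 'a set) \<Rightarrow> ('s \<Rightarrow> 'b set) \<Rightarrow> (nat \<Rightarrow> 'a option \<Rightarrow> 'b option \<Rightarrow> real)
   \<Rightarrow> nat \<Rightarrow> 's \<Rightarrow> real" where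
  "ckdg_w C1 C2 M i s =
     (if i = 1 then mat_value (ext_actions (C1 s)) (ext_actions (C2 s)) (M 1)
      else mat_value (ext_actions (C2 s)) (ext_actions (C1 s)) (\<lambda>y x. M 2 x y))"

definition ckdg_err ::
  "'s set \<Rightarrow> ('s \<Rightarrow> real) \<Rightarrow> ('s \<Rightarrow> 'a set) \<Rightarrow> ('s \<Rightarrow> 'b set)
   \<Rightarrow> (nat \<Rightarrow> 's \<Rightarrow> real) \<Rightarrow> (nat \<Rightarrow> 'a option \<Rightarrow> 'b option \<Rightarrow> real) \<Rightarrow> real" where
  "ckdg_err S P C1 C2 u M =
     (\<Sum>s\<in>S. P s * (if u 1 s \<le> u 2 s then \<bar>u 1 s - u 2 s\<bar> * ckdg_w C1 C2 M 1 s
                     else \<bar>u 1 s - u 2 s\<bar> * ckdg_w C1 C2 M 2 s))"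

definition is_ckddg ::
  "'a set \<Rightarrow> 's set \<Rightarrow> ('s \<Rightarrow> real) \<Rightarrow> ('s \<Rightarrow> 'a set) \<Rightarrow> ('s \<Rightarrow> 'a set) \<Rightarrow> bool" where
  "is_ckddg A S P Cw Cl \<longleftrightarrow>
     finite A \<and> finite S \<and> is_pmf_on S P \<and> (\<forall>s\<in>S. Cw s \<subseteq> A \<and> Cl s \<subseteq> A)"

text \<open>The induced CKDG (A, A, {1,2} \<times> S, P', C1', C2', u').\<close>
definition ind_S :: "'s set \<Rightarrow> (nat \<times> 's) set" where
  "ind_S S = {1,2} \<times> S"
definition ind_P :: "('s \<Rightarrow> real) \<Rightarrow> nat \<times> 's \<Rightarrow> real" where
  "ind_P P = (\<lambda>(i,s). P s / 2)"
definition ind_C :: "('s \<Rightarrow> 'a set) \<Rightarrow> ('s \<Rightarrow> 'a set) \<Rightarrow> nat \<Rightarrow> nat \<times> 's \<Rightarrow> 'a set" where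
  "ind_C Cw Cl j = (\<lambda>(i,s). if i = j then Cw s else Cl s)"
definition ind_u :: "nat \<Rightarrow> nat \<times> 's \<Rightarrow> real" where
  "ind_u j = (\<lambda>(i,s). if i = j then 1 else 0)"

definition ckddg_err ::
  "'s set \<Rightarrow> ('s \<Rightarrow> real) \<Rightarrow> ('s \<Rightarrow> 'a set) \<Rightarrow> ('s \<Rightarrow> 'a set)
   \<Rightarrow> (nat \<Rightarrow> 'a option \<Rightarrow> 'a option \<Rightarrow> real) \<Rightarrow> real" where
  "ckddg_err S P Cw Cl M =
     ckdg_err (ind_S S) (ind_P P) (ind_C Cw Cl 1) (ind_C Cw Cl 2) ind_u M"

definition is_piddg ::
  "'a set \<Rightarrow> 's set \<Rightarrow> ('s \<Rightarrow> real) \<Rightarrow> ('s \<Rightarrow> 'a set) \<Rightarrow> ('s \<Rightarrow> 'a set) \<Rightarrow> bool" where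
  "is_piddg A S P Cw Cl \<longleftrightarrow>
     finite A \<and> finite S \<and> is_pmf_on S P \<and> (\<forall>s\<in>S. Cw s \<subseteq> A \<and> Cl s \<subseteq> A)"

definition available :: "'a set \<Rightarrow> 'a option \<Rightarrow> bool" where
  "available T a \<longleftrightarrow> a \<in> ext_actions T"

definition bg_payoff ::
  "(nat \<Rightarrow> 'a option \<Rightarrow> 'a option \<Rightarrow> real) \<Rightarrow> nat \<Rightarrow> 'a set \<Rightarrow> 'a set
   \<Rightarrow> 'a option \<Rightarrow> 'a option \<Rightarrow> real" where
  "bg_payoff M i T1 T2 a1 a2 =
     (let own = (if i = 1 then available T1 a1 else available T2 a2);
          oth = (if i = 1 then available T2 a2 else available T1 a1)
      in if own \<and> oth then M i a1 a2
         else if \<not> own \<and> oth then 0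
         else if own \<and> \<not> oth then 1
         else 1 / 2)"

definition bg_strategies :: "'a set \<Rightarrow> 'a set set \<Rightarrow> ('a set \<Rightarrow> 'a option \<Rightarrow> real) set" where
  "bg_strategies A Ts = {\<sigma>. \<forall>T\<in>Ts. \<sigma> T \<in> mixed (ext_actions A)}"

definition bg_expected ::
  "'a set \<Rightarrow> 's set \<Rightarrow> ('s \<Rightarrow> real) \<Rightarrow> ('s \<Rightarrow> 'a set) \<Rightarrow> ('s \<Rightarrow> 'a set)
   \<Rightarrow> (nat \<Rightarrow> 'a option \<Rightarrow> 'a option \<Rightarrow> real) \<Rightarrow> nat
   \<Rightarrow> ('a set \<Rightarrow> 'a option \<Rightarrow> real) \<Rightarrow> ('a set \<Rightarrow> 'a option \<Rightarrow> real) \<Rightarrow> real" where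
  "bg_expected A S P T1 T2 M i \<sigma>1 \<sigma>2 =
     (\<Sum>s\<in>S. P s * (\<Sum>a1\<in>ext_actions A. \<Sum>a2\<in>ext_actions A.
        \<sigma>1 (T1 s) a1 * \<sigma>2 (T2 s) a2 * bg_payoff M i (T1 s) (T2 s) a1 a2))"

definition bg_value ::
  "'a set \<Rightarrow> 's set \<Rightarrow> ('s \<Rightarrow> real) \<Rightarrow> ('s \<Rightarrow> 'a set) \<Rightarrow> ('s \<Rightarrow> 'a set)
   \<Rightarrow> (nat \<Rightarrow> 'a option \<Rightarrow> 'a option \<Rightarrow> real) \<Rightarrow> nat \<Rightarrow> real" where
  "bg_value A S P T1 T2 M i =
     (if i = 1 then
        (SUP \<sigma>1 \<in> bg_strategies A (T1 ` S). INF \<sigma>2 \<in> bg_strategies A (T2 ` S).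
           bg_expected A S P T1 T2 M 1 \<sigma>1 \<sigma>2)
      else
        (SUP \<sigma>2 \<in> bg_strategies A (T2 ` S). INF \<sigma>1 \<in> bg_strategies A (T1 ` S).
           bg_expected A S P T1 T2 M 2 \<sigma>1 \<sigma>2))"

text \<open>G_1(B,M): agent 1 has type Cw s, agent 2 has type Cl s; G_2(B,M) swaps the types.
  Error = (v_1(G_2) + v_2(G_1)) / 2.\<close>
definition piddg_err ::
  "'a set \<Rightarrow> 's set \<Rightarrow> ('s \<Rightarrow> real) \<Rightarrow> ('s \<Rightarrow> 'a set) \<Rightarrow> ('s \<Rightarrow> 'a set)
   \<Rightarrow> (nat \<Rightarrow> 'a option \<Rightarrow> 'a option \<Rightarrow> real) \<Rightarrow> real" where
  "piddg_err A S P Cw Cl M =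
     (bg_value A S P Cl Cw M 1 + bg_value A S P Cw Cl M 2) / 2"

end

theory Submission
  imports Defs
begin

lemma mixed_sum_ge:
  assumes "p \<in> mixed R" "\<forall>x\<in>R. a \<le> h x"
  shows "a \<le> (\<Sum>x\<in>R. p x * h x)"
proof -
  have "(\<Sum>x\<in>R. p x * a) \<le> (\<Sum>x\<in>R. p x * h x)"
    using assms by (intro sum_mono) (auto simp: mixed_def intro: mult_left_mono)
  moreover have "(\<Sum>x\<in>R. p x * a) = a"
    using assms by (simp add: mixed_def sum_distrib_right[symmetric])
  ultimately show ?thesis by simp
qed

lemma mixed_sum_le:
  assumes "p \<in> mixed R" "\<forall>x\<in>R. h x \<le> a"
  shows "(\<Sum>x\<in>R. p x * h x) \<le> a"
proof -
  have "(\<Sum>x\<in>R. p x * h x) \<le> (\<Sum>x\<in>R. p x * a)"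
    using assms by (intro sum_mono) (auto simp: mixed_def intro: mult_left_mono)
  moreover have "(\<Sum>x\<in>R. p x * a) = a"
    using assms by (simp add: mixed_def sum_distrib_right[symmetric])
  ultimately show ?thesis by simp
qed

lemma bil_swap:
  "(\<Sum>x\<in>R. \<Sum>y\<in>C. p x * q y * (g x y::real)) = (\<Sum>y\<in>C. q y * (\<Sum>x\<in>R. p x * g x y))"
  by (subst sum.swap) (simp add: sum_distrib_left mult.assoc mult.left_commute)

lemma bil_noswap:
  "(\<Sum>x\<in>R. \<Sum>y\<in>C. p x * q y * (g x y::real)) = (\<Sum>x\<in>R. p x * (\<Sum>y\<in>C. q y * g x y))"
  by (simp add: sum_distrib_left mult.assoc)

lemma bil_ge:
  assumes "p \<in> mixed R" "q \<in> mixed C" "\<forall>y\<in>C. c \<le> (\<Sum>x\<in>R. p x * g x y)"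
  shows "c \<le> (\<Sum>x\<in>R. \<Sum>y\<in>C. p x * q y * g x y)"
  unfolding bil_swap using assms by (intro mixed_sum_ge) auto

lemma bil_le:
  assumes "p \<in> mixed R" "q \<in> mixed C" "\<forall>x\<in>R. (\<Sum>y\<in>C. q y * g x y) \<le> c"
  shows "(\<Sum>x\<in>R. \<Sum>y\<in>C. p x * q y * g x y) \<le> c"
  unfolding bil_noswap using assms by (intro mixed_sum_le) auto

lemma supinf_ge:
  fixes f :: "'x \<Rightarrow> 'y \<Rightarrow> real"
  assumes "xo \<in> X" "Y \<noteq> {}" "\<forall>x\<in>X. \<forall>y\<in>Y. f x y \<le> hi" "\<forall>x\<in>X. \<forall>y\<in>Y. lo \<le> f x y"
    "\<forall>y\<in>Y. c \<le> f xo y"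
  shows "c \<le> (SUP x\<in>X. INF y\<in>Y. f x y)"
proof -
  obtain y1 where y1: "y1 \<in> Y" using assms(2) by auto
  have "c \<le> (INF y\<in>Y. f xo y)" using assms by (intro cINF_greatest) auto
  also have "\<dots> \<le> (SUP x\<in>X. INF y\<in>Y. f x y)"
  proof (rule cSUP_upper[OF assms(1)])
    have "(INF y\<in>Y. f x y) \<le> hi" if "x \<in> X" for x
    proof -
      have "(INF y\<in>Y. f x y) \<le> f x y1"
        using that y1 assms(4) by (intro cINF_lower) (auto intro!: bdd_belowI2)
      also have "\<dots> \<le> hi" using that y1 assms(3) by auto
      finally show ?thesis .
    qed
    then show "bdd_above ((\<lambda>x. INF y\<in>Y. f x y) ` X)" by (auto intro!: bdd_aboveI2)
  qed
  finally show ?thesis .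
qed

lemma supinf_le:
  fixes f :: "'x \<Rightarrow> 'y \<Rightarrow> real"
  assumes "X \<noteq> {}" "yo \<in> Y" "\<forall>x\<in>X. \<forall>y\<in>Y. lo \<le> f x y" "\<forall>x\<in>X. f x yo \<le> c"
  shows "(SUP x\<in>X. INF y\<in>Y. f x y) \<le> c"
proof (rule cSUP_least[OF assms(1)])
  fix x assume x: "x \<in> X"
  have "(INF y\<in>Y. f x y) \<le> f x yo"
    using x assms by (intro cINF_lower) (auto intro!: bdd_belowI2)
  also have "\<dots> \<le> c" using x assms by auto
  finally show "(INF y\<in>Y. f x y) \<le> c" .
qed

definition pr2 :: "'x \<Rightarrow> 'x \<Rightarrow> 'x \<Rightarrow> real" where
  "pr2 r r' x = (if x = r then 1/2 else 0) + (if x = r' then 1/2 else 0)"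

lemma sum_pr2:
  assumes "finite R" "r \<in> R" "r' \<in> R"
  shows "(\<Sum>x\<in>R. pr2 r r' x * h x) = (h r + h r') / 2"
proof -
  have "(\<Sum>x\<in>R. pr2 r r' x * h x) = (\<Sum>x\<in>R. (if x = r then h x / 2 else 0)) + (\<Sum>x\<in>R. (if x = r' then h x / 2 else 0))"
    unfolding pr2_def sum.distrib[symmetric] by (intro sum.cong) auto
  also have "\<dots> = h r / 2 + h r' / 2" using assms by (simp add: sum.delta)
  finally show ?thesis by simp
qed

lemma pr2_mixed:
  assumes "finite R" "r \<in> R" "r' \<in> R"
  shows "pr2 r r' \<in> mixed R"
proof -
  have "(\<Sum>x\<in>R. pr2 r r' x * 1) = 1" using sum_pr2[OF assms, of "\<lambda>_. 1"] by simp
  then show ?thesis unfolding mixed_def pr2_def by auto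
qed

lemma bil_bounds:
  assumes "p \<in> mixed R" "q \<in> mixed C" "\<forall>x\<in>R. \<forall>y\<in>C. 0 \<le> g x y \<and> g x y \<le> 1"
  shows "0 \<le> (\<Sum>x\<in>R. \<Sum>y\<in>C. p x * q y * g x y) \<and> (\<Sum>x\<in>R. \<Sum>y\<in>C. p x * q y * g x y) \<le> 1"
proof
  show "0 \<le> (\<Sum>x\<in>R. \<Sum>y\<in>C. p x * q y * g x y)"
    using assms by (intro bil_ge) (auto intro!: mixed_sum_ge)
  show "(\<Sum>x\<in>R. \<Sum>y\<in>C. p x * q y * g x y) \<le> 1"
    using assms by (intro bil_le) (auto intro!: mixed_sum_le)
qed

lemma mv_ge:
  assumes "finite C" "C \<noteq> {}" "\<forall>x\<in>R. \<forall>y\<in>C. 0 \<le> g x y \<and> g x y \<le> 1"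
    "p \<in> mixed R" "\<forall>y\<in>C. c \<le> (\<Sum>x\<in>R. p x * g x y)"
  shows "c \<le> mat_value R C g"
  unfolding mat_value_def
proof (rule supinf_ge[where hi=1 and lo=0])
  obtain yo where "yo \<in> C" using assms by auto
  then show "mixed C \<noteq> {}" using pr2_mixed[OF assms(1), of yo yo] by auto
  have B: "\<forall>p\<in>mixed R. \<forall>q\<in>mixed C. 0 \<le> (\<Sum>x\<in>R. \<Sum>y\<in>C. p x * q y * g x y) \<and> (\<Sum>x\<in>R. \<Sum>y\<in>C. p x * q y * g x y) \<le> 1"
    using bil_bounds[where g=g] assms(3) by blast
  then show "\<forall>p\<in>mixed R. \<forall>q\<in>mixed C. (\<Sum>x\<in>R. \<Sum>y\<in>C. p x * q y * g x y) \<le> 1" by blast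
  from B show "\<forall>p\<in>mixed R. \<forall>q\<in>mixed C. 0 \<le> (\<Sum>x\<in>R. \<Sum>y\<in>C. p x * q y * g x y)" by blast
  show "\<forall>q\<in>mixed C. c \<le> (\<Sum>x\<in>R. \<Sum>y\<in>C. p x * q y * g x y)"
    using bil_ge[OF assms(4) _ assms(5)] by blast
qed (fact assms)

lemma mv_le:
  assumes "finite R" "R \<noteq> {}" "\<forall>x\<in>R. \<forall>y\<in>C. 0 \<le> g x y \<and> g x y \<le> 1"
    "q \<in> mixed C" "\<forall>x\<in>R. (\<Sum>y\<in>C. q y * g x y) \<le> c"
  shows "mat_value R C g \<le> c"
  unfolding mat_value_def
proof (rule supinf_le[where lo=0])
  obtain xo where "xo \<in> R" using assms by auto
  then show "mixed R \<noteq> {}" using pr2_mixed[OF assms(1), of xo xo] by auto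
  show "\<forall>p\<in>mixed R. \<forall>q\<in>mixed C. 0 \<le> (\<Sum>x\<in>R. \<Sum>y\<in>C. p x * q y * g x y)"
    using bil_bounds[where g=g] assms(3) by blast
  show "\<forall>p\<in>mixed R. (\<Sum>x\<in>R. \<Sum>y\<in>C. p x * q y * g x y) \<le> c"
    using bil_le[OF _ assms(4) assms(5)] by blast
qed (fact assms)

definition lbv :: "'x set \<Rightarrow> 'y set \<Rightarrow> ('x \<Rightarrow> 'y \<Rightarrow> real) \<Rightarrow> real" where
  "lbv R C g = Max ((\<lambda>(r,r'). Min ((\<lambda>c. (g r c + g r' c)/2) ` C)) ` (R \<times> R))"

lemma lbv_attained:
  assumes "finite R" "finite C" "R \<noteq> {}" "C \<noteq> {}"
  obtains r r' where "r \<in> R" "r' \<in> R" "\<forall>c\<in>C. lbv R C g \<le> (g r c + g r' c)/2"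
proof -
  have "lbv R C g \<in> (\<lambda>(r,r'). Min ((\<lambda>c. (g r c + g r' c)/2) ` C)) ` (R \<times> R)"
    unfolding lbv_def using assms by (intro Max_in) auto
  then obtain r r' where rr: "r \<in> R" "r' \<in> R" "lbv R C g = Min ((\<lambda>c. (g r c + g r' c)/2) ` C)"
    by auto
  have "\<forall>c\<in>C. lbv R C g \<le> (g r c + g r' c)/2"
  proof
    fix c assume "c \<in> C"
    then show "lbv R C g \<le> (g r c + g r' c)/2"
      unfolding rr(3) using assms by (intro Min_le) auto
  qed
  with rr that show ?thesis by blast
qed

lemma mv_lbv:
  assumes "finite R" "finite C" "R \<noteq> {}" "C \<noteq> {}" "\<forall>x\<in>R. \<forall>y\<in>C. 0 \<le> g x y \<and> g x y \<le> 1"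
  shows "lbv R C g \<le> mat_value R C g"
proof -
  obtain r r' where rr: "r \<in> R" "r' \<in> R" "\<forall>c\<in>C. lbv R C g \<le> (g r c + g r' c)/2"
    using lbv_attained[OF assms(1-4)] by blast
  show ?thesis
  proof (rule mv_ge[OF assms(2,4,5) pr2_mixed[OF assms(1) rr(1,2)]], intro ballI)
    fix y assume y: "y \<in> C"
    have "(\<Sum>x\<in>R. pr2 r r' x * g x y) = (g r y + g r' y)/2"
      by (rule sum_pr2[OF assms(1) rr(1,2)])
    with rr(3) y show "lbv R C g \<le> (\<Sum>x\<in>R. pr2 r r' x * g x y)" by fastforce
  qed
qed

definition Aex :: "nat set" where "Aex = {1,2}"
definition Sex :: "nat set" where "Sex = {0,1,2}"
definition Pex :: "nat \<Rightarrow> real" where "Pex s = (if s = 1 then 1/5 else 2/5)"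
definition Cw :: "nat \<Rightarrow> nat set" where "Cw s = (if s = 0 then {} else if s = 1 then {1} else {1,2})"
definition Cl :: "nat \<Rightarrow> nat set" where "Cl s = (if s = 0 then {1,2} else if s = 1 then {2} else {1})"


definition T1 :: "(nat \<Rightarrow> nat option \<Rightarrow> nat option \<Rightarrow> real) \<Rightarrow> nat \<Rightarrow> real" where
  "T1 M s = mat_value (ext_actions (Cl s)) (ext_actions (Cw s)) (M 1)"
definition T2 :: "(nat \<Rightarrow> nat option \<Rightarrow> nat option \<Rightarrow> real) \<Rightarrow> nat \<Rightarrow> real" where
  "T2 M s = mat_value (ext_actions (Cl s)) (ext_actions (Cw s)) (\<lambda>y x. M 2 x y)"
definition errexp :: "(nat \<Rightarrow> nat option \<Rightarrow> nat option \<Rightarrow> real) \<Rightarrow> real" where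
  "errexp M = (\<Sum>s\<in>Sex. Pex s / 2 * (T1 M s + T2 M s))"

lemma ckddg_eq: "ckddg_err Sex Pex Cw Cl M = errexp M"
  unfolding ckddg_err_def ckdg_err_def ind_S_def errexp_def
  by (simp add: sum.cartesian_product[symmetric] ind_P_def ind_C_def ind_u_def ckdg_w_def
      T1_def T2_def Sex_def algebra_simps sum.distrib)

definition C1n :: "nat \<Rightarrow> nat set" where "C1n k = (if k < 3 then Cw k else Cl (k - 3))"
definition C2n :: "nat \<Rightarrow> nat set" where "C2n k = (if k < 3 then Cl k else Cw (k - 3))"
definition un :: "nat \<Rightarrow> nat \<Rightarrow> real" where "un i k = (if (i = 1) = (k < 3) then 1 else 0)"
definition Pn :: "nat \<Rightarrow> real" where "Pn k = Pex (k mod 3) / 2"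

lemma six: "{0..<6::nat} = {0,1,2,3,4,5}" by auto

lemma ckdg_eq: "ckdg_err {0..<6} Pn C1n C2n un M = errexp M"
  unfolding ckdg_err_def errexp_def six
  by (simp add: Pn_def C1n_def C2n_def un_def ckdg_w_def T1_def T2_def Sex_def algebra_simps)

lemma mv_nonneg:
  assumes "finite R" "finite C" "R \<noteq> {}" "C \<noteq> {}" "\<forall>x\<in>R. \<forall>y\<in>C. 0 \<le> g x y \<and> g x y \<le> 1"
  shows "0 \<le> mat_value R C g"
proof -
  obtain r where r: "r \<in> R" using assms by auto
  show ?thesis
    by (rule mv_ge[OF assms(2,4,5) pr2_mixed[OF assms(1) r r]]) (use assms in \<open>auto intro!: mixed_sum_ge[OF pr2_mixed[OF assms(1) r r]]\<close>)
qed

lemma ext_fin: "finite A \<Longrightarrow> finite (ext_actions A)" by (simp add: ext_actions_def)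
lemma ext_ne: "ext_actions A \<noteq> {}" by (simp add: ext_actions_def)
lemma ext_mono: "A \<subseteq> B \<Longrightarrow> ext_actions A \<subseteq> ext_actions B" by (auto simp: ext_actions_def)

lemma Cl_sub: "s \<in> Sex \<Longrightarrow> Cl s \<subseteq> Aex" by (auto simp: Sex_def Cl_def Aex_def)
lemma Cw_sub: "s \<in> Sex \<Longrightarrow> Cw s \<subseteq> Aex" by (auto simp: Sex_def Cw_def Aex_def)
lemma Cl_fin: "finite (Cl s)" by (simp add: Cl_def)
lemma Cw_fin: "finite (Cw s)" by (simp add: Cw_def)

lemma pol_bounds:
  assumes "M \<in> policies A A" "x \<in> ext_actions A" "y \<in> ext_actions A" "i \<in> {1,2}"
  shows "0 \<le> M i x y \<and> M i x y \<le> 1"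
  using assms unfolding policies_def by blast

lemma T_bounds:
  assumes "M \<in> policies Aex Aex" "s \<in> Sex" "i \<in> {1,2}"
  shows "\<forall>x\<in>ext_actions (Cl s). \<forall>y\<in>ext_actions (Cw s). 0 \<le> M i x y \<and> M i x y \<le> 1"
    and "\<forall>x\<in>ext_actions (Cl s). \<forall>y\<in>ext_actions (Cw s). 0 \<le> M i y x \<and> M i y x \<le> 1"
  using pol_bounds[OF assms(1) _ _ assms(3)] ext_mono[OF Cl_sub[OF assms(2)]] ext_mono[OF Cw_sub[OF assms(2)]]
  by blast+

lemma T1_nonneg: "M \<in> policies Aex Aex \<Longrightarrow> s \<in> Sex \<Longrightarrow> 0 \<le> T1 M s"
  unfolding T1_def by (rule mv_nonneg[OF ext_fin ext_fin ext_ne ext_ne T_bounds(1)]) (auto simp: Cl_fin Cw_fin)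
lemma T2_nonneg: "M \<in> policies Aex Aex \<Longrightarrow> s \<in> Sex \<Longrightarrow> 0 \<le> T2 M s"
  unfolding T2_def by (rule mv_nonneg[OF ext_fin ext_fin ext_ne ext_ne T_bounds(2)]) (auto simp: Cl_fin Cw_fin)

lemma errexp_nonneg: "M \<in> policies Aex Aex \<Longrightarrow> 0 \<le> errexp M"
  unfolding errexp_def
  by (intro sum_nonneg mult_nonneg_nonneg add_nonneg_nonneg T1_nonneg T2_nonneg) (auto simp: Pex_def)

definition tab :: "nat option \<Rightarrow> nat option \<Rightarrow> real" where
  "tab x y = (if x = Some 1 \<and> (y = None \<or> y = Some 2) then 1/2 else if x = Some 2 \<and> y = Some 1 then 1 else 0)"
definition Mst :: "nat \<Rightarrow> nat option \<Rightarrow> nat option \<Rightarrow> real" where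
  "Mst i x y = (if i \<in> {1,2} \<and> x \<in> ext_actions Aex \<and> y \<in> ext_actions Aex then (if i = 1 then tab x y else 1 - tab x y) else 0)"

lemma Mst_pol: "Mst \<in> policies Aex Aex"
  unfolding policies_def Mst_def tab_def by auto

lemma extA: "ext_actions Aex = {None, Some 1, Some 2}" by (simp add: ext_actions_def Aex_def)

definition q23 :: "nat option \<Rightarrow> real" where
  "q23 x = (if x = Some 1 then 2/3 else if x = Some 2 then 1/3 else 0)"

lemma Mst_T1: "s \<in> Sex \<Longrightarrow> T1 Mst s \<le> (if s = 0 then 1/2 else 0)"
  unfolding T1_def
  apply (rule mv_le[OF ext_fin ext_ne T_bounds(1)[OF Mst_pol], where q = "pr2 (if s = 2 then Some 1 else None) (if s = 2 then Some 1 else None)"])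
  apply (auto simp: Cl_fin Cw_fin intro!: pr2_mixed)
  apply (auto simp: Sex_def Cl_def Cw_def ext_actions_def pr2_def Mst_def tab_def Aex_def)
  done

lemma q23_mixed: "q23 \<in> mixed (ext_actions (Cw 2))"
  by (simp add: mixed_def q23_def Cw_def ext_actions_def)

lemma Mst_T2_0: "T2 Mst 0 \<le> 1"
  unfolding T2_def
  apply (rule mv_le[OF ext_fin ext_ne T_bounds(2)[OF Mst_pol], where q = "pr2 None None"])
  apply (auto simp: Cl_fin Cw_fin Sex_def intro!: pr2_mixed)
  apply (auto simp: Sex_def Cl_def Cw_def ext_actions_def pr2_def Mst_def tab_def Aex_def)
  done

lemma Mst_T2_1: "T2 Mst 1 \<le> 1/2"
  unfolding T2_def
  apply (rule mv_le[OF ext_fin ext_ne T_bounds(2)[OF Mst_pol], where q = "pr2 (Some 1) (Some 1)"])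
  apply (auto simp: Cl_fin Cw_fin Sex_def intro!: pr2_mixed)
     apply (auto simp: Sex_def Cl_def Cw_def ext_actions_def pr2_def Mst_def tab_def Aex_def)
  done

lemma Mst_T2_2: "T2 Mst 2 \<le> 2/3"
  unfolding T2_def
  apply (rule mv_le[OF ext_fin ext_ne T_bounds(2)[OF Mst_pol] q23_mixed])
  apply (auto simp: Cl_fin Cw_fin Sex_def)
  apply (auto simp: Sex_def Cl_def Cw_def ext_actions_def q23_def Mst_def tab_def Aex_def)
  done

lemma errexp_Mst: "errexp Mst \<le> 29/60"
proof -
  have "errexp Mst = 1/5 * (T1 Mst 0 + T2 Mst 0) + 1/10 * (T1 Mst 1 + T2 Mst 1) + 1/5 * (T1 Mst 2 + T2 Mst 2)"
    by (simp add: errexp_def Sex_def Pex_def field_simps)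
  moreover have "T1 Mst 0 \<le> 1/2" "T1 Mst 1 \<le> 0" "T1 Mst 2 \<le> 0"
    using Mst_T1[of 0] Mst_T1[of 1] Mst_T1[of 2] by (auto simp: Sex_def)
  ultimately show ?thesis using Mst_T2_0 Mst_T2_1 Mst_T2_2 by (simp add: field_simps)
qed

lemma lbv_cand:
  assumes "finite R" "finite C" "r \<in> R" "r' \<in> R"
  shows "Min ((\<lambda>c. (g r c + g r' c)/2) ` C) \<le> lbv R C g"
  unfolding lbv_def using assms by (intro Max_ge) auto

definition lbexp :: "(nat \<Rightarrow> nat option \<Rightarrow> nat option \<Rightarrow> real) \<Rightarrow> real" where
  "lbexp M = (\<Sum>s\<in>Sex. Pex s / 2 * (lbv (ext_actions (Cl s)) (ext_actions (Cw s)) (M 1)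
       + lbv (ext_actions (Cl s)) (ext_actions (Cw s)) (\<lambda>y x. M 2 x y)))"

lemma errexp_lbexp:
  assumes "M \<in> policies Aex Aex"
  shows "lbexp M \<le> errexp M"
  unfolding lbexp_def errexp_def
proof (intro sum_mono mult_left_mono add_mono)
  fix s assume s: "s \<in> Sex"
  show "lbv (ext_actions (Cl s)) (ext_actions (Cw s)) (M 1) \<le> T1 M s"
    unfolding T1_def by (rule mv_lbv[OF ext_fin ext_fin ext_ne ext_ne T_bounds(1)[OF assms s]]) (auto simp: Cl_fin Cw_fin)
  show "lbv (ext_actions (Cl s)) (ext_actions (Cw s)) (\<lambda>y x. M 2 x y) \<le> T2 M s"
    unfolding T2_def by (rule mv_lbv[OF ext_fin ext_fin ext_ne ext_ne T_bounds(2)[OF assms s]]) (auto simp: Cl_fin Cw_fin)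
  show "0 \<le> Pex s / 2" by (simp add: Pex_def)
qed

lemma core:
  fixes m00 m01 m02 m10 m11 m12 m20 m21 m22 L01 L02 L11 L12 L21 L22 :: real
  assumes d: "m00 = 0 \<or> m00 = 1"
    "m01 = 0 \<or> m01 = 1"
    "m02 = 0 \<or> m02 = 1"
    "m10 = 0 \<or> m10 = 1"
    "m11 = 0 \<or> m11 = 1"
    "m12 = 0 \<or> m12 = 1"
    "m20 = 0 \<or> m20 = 1"
    "m21 = 0 \<or> m21 = 1"
    "m22 = 0 \<or> m22 = 1"
    and f: "(m00 + m00) / 2 \<le> L01"
    "(m00 + m10) / 2 \<le> L01"
    "(m00 + m20) / 2 \<le> L01"
    "(m10 + m10) / 2 \<le> L01"
    "(m10 + m20) / 2 \<le> L01"
    "(m20 + m20) / 2 \<le> L01"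
    "((1 - m00) + (1 - m00)) / 2 \<le> L02"
    "((1 - m00) + (1 - m01)) / 2 \<le> L02"
    "((1 - m00) + (1 - m02)) / 2 \<le> L02"
    "((1 - m01) + (1 - m01)) / 2 \<le> L02"
    "((1 - m01) + (1 - m02)) / 2 \<le> L02"
    "((1 - m02) + (1 - m02)) / 2 \<le> L02"
    "min ((m00 + m00) / 2) ((m01 + m01) / 2) \<le> L11"
    "min ((m00 + m20) / 2) ((m01 + m21) / 2) \<le> L11"
    "min ((m20 + m20) / 2) ((m21 + m21) / 2) \<le> L11"
    "min (((1 - m00) + (1 - m00)) / 2) (((1 - m10) + (1 - m10)) / 2) \<le> L12"
    "min (((1 - m00) + (1 - m02)) / 2) (((1 - m10) + (1 - m12)) / 2) \<le> L12"
    "min (((1 - m02) + (1 - m02)) / 2) (((1 - m12) + (1 - m12)) / 2) \<le> L12"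
    "min ((m00 + m00) / 2) (min ((m01 + m01) / 2) ((m02 + m02) / 2)) \<le> L21"
    "min ((m00 + m10) / 2) (min ((m01 + m11) / 2) ((m02 + m12) / 2)) \<le> L21"
    "min ((m10 + m10) / 2) (min ((m11 + m11) / 2) ((m12 + m12) / 2)) \<le> L21"
    "min (((1 - m00) + (1 - m00)) / 2) (min (((1 - m10) + (1 - m10)) / 2) (((1 - m20) + (1 - m20)) / 2)) \<le> L22"
    "min (((1 - m00) + (1 - m01)) / 2) (min (((1 - m10) + (1 - m11)) / 2) (((1 - m20) + (1 - m21)) / 2)) \<le> L22"
    "min (((1 - m01) + (1 - m01)) / 2) (min (((1 - m11) + (1 - m11)) / 2) (((1 - m21) + (1 - m21)) / 2)) \<le> L22"
  shows "5 \<le> 2 * (L01 + L02) + (L11 + L12) + 2 * (L21 + L22)"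
proof -
  from d(1) show ?thesis
  proof
    assume v00: "m00 = 0"
    from d(4) show ?thesis
    proof
      assume v10: "m10 = 0"
      from d(2) show ?thesis
      proof
        assume v01: "m01 = 0"
        from d(3) show ?thesis
        proof
          assume v02: "m02 = 0"
          from d(7) show ?thesis
          proof
            assume v20: "m20 = 0"
            show ?thesis using v00 v10 v01 v02 v20 f(1) f(7) f(13) f(16) f(19) f(22) by (simp; linarith)
          next
            assume v20: "m20 = 1"
            show ?thesis using v00 v10 v01 v02 v20 f(6) f(7) f(13) f(16) f(19) f(22) by (simp; linarith)
          qed
        next
          assume v02: "m02 = 1"
          from d(7) show ?thesis
          proof
            assume v20: "m20 = 0"
            show ?thesis using v00 v10 v01 v02 v20 f(1) f(7) f(13) f(16) f(19) f(22) by (simp; linarith)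
          next
            assume v20: "m20 = 1"
            show ?thesis using v00 v10 v01 v02 v20 f(6) f(7) f(13) f(16) f(19) f(22) by (simp; linarith)
          qed
        qed
      next
        assume v01: "m01 = 1"
        from d(3) show ?thesis
        proof
          assume v02: "m02 = 0"
          from d(7) show ?thesis
          proof
            assume v20: "m20 = 0"
            show ?thesis using v00 v10 v01 v02 v20 f(1) f(7) f(13) f(16) f(19) f(22) by (simp; linarith)
          next
            assume v20: "m20 = 1"
            show ?thesis using v00 v10 v01 v02 v20 f(6) f(7) f(13) f(16) f(19) f(22) by (simp; linarith)
          qed
        next
          assume v02: "m02 = 1"
          from d(7) show ?thesis
          proof
            assume v20: "m20 = 0"
            show ?thesis using v00 v10 v01 v02 v20 f(1) f(7) f(13) f(16) f(19) f(22) by (simp; linarith)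
          next
            assume v20: "m20 = 1"
            show ?thesis using v00 v10 v01 v02 v20 f(6) f(7) f(13) f(16) f(19) f(22) by (simp; linarith)
          qed
        qed
      qed
    next
      assume v10: "m10 = 1"
      from d(6) show ?thesis
      proof
        assume v12: "m12 = 0"
        from d(2) show ?thesis
        proof
          assume v01: "m01 = 0"
          from d(3) show ?thesis
          proof
            assume v02: "m02 = 0"
            from d(7) show ?thesis
            proof
              assume v20: "m20 = 0"
              show ?thesis using v00 v10 v12 v01 v02 v20 f(4) f(7) f(13) f(18) f(19) f(22) by (simp; linarith)
            next
              assume v20: "m20 = 1"
              show ?thesis using v00 v10 v12 v01 v02 v20 f(4) f(7) f(13) f(18) f(19) f(22) by (simp; linarith)
            qed
          next
            assume v02: "m02 = 1"
            from d(5) show ?thesis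
            proof
              assume v11: "m11 = 0"
              from d(8) show ?thesis
              proof
                assume v21: "m21 = 0"
                show ?thesis using v00 v10 v12 v01 v02 v11 v21 f(4) f(7) f(13) f(17) f(19) f(24) by (simp; linarith)
              next
                assume v21: "m21 = 1"
                from d(7) show ?thesis
                proof
                  assume v20: "m20 = 0"
                  show ?thesis using v00 v10 v12 v01 v02 v11 v21 v20 f(4) f(7) f(13) f(17) f(19) f(23) by (simp; linarith)
                next
                  assume v20: "m20 = 1"
                  show ?thesis using v00 v10 v12 v01 v02 v11 v21 v20 f(4) f(7) f(15) f(17) f(19) f(22) by (simp; linarith)
                qed
              qed
            next
              assume v11: "m11 = 1"
              from d(7) show ?thesis
              proof
                assume v20: "m20 = 0"
                show ?thesis using v00 v10 v12 v01 v02 v11 v20 f(4) f(7) f(13) f(17) f(20) f(22) by (simp; linarith)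
              next
                assume v20: "m20 = 1"
                show ?thesis using v00 v10 v12 v01 v02 v11 v20 f(4) f(7) f(13) f(17) f(20) f(22) by (simp; linarith)
              qed
            qed
          qed
        next
          assume v01: "m01 = 1"
          from d(3) show ?thesis
          proof
            assume v02: "m02 = 0"
            from d(7) show ?thesis
            proof
              assume v20: "m20 = 0"
              show ?thesis using v00 v10 v12 v01 v02 v20 f(4) f(7) f(13) f(18) f(19) f(22) by (simp; linarith)
            next
              assume v20: "m20 = 1"
              show ?thesis using v00 v10 v12 v01 v02 v20 f(4) f(7) f(13) f(18) f(19) f(22) by (simp; linarith)
            qed
          next
            assume v02: "m02 = 1"
            from d(5) show ?thesis
            proof
              assume v11: "m11 = 0"
              from d(7) show ?thesis
              proof
                assume v20: "m20 = 0"
                show ?thesis using v00 v10 v12 v01 v02 v11 v20 f(4) f(7) f(13) f(17) f(20) f(22) by (simp; linarith)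
              next
                assume v20: "m20 = 1"
                show ?thesis using v00 v10 v12 v01 v02 v11 v20 f(4) f(7) f(13) f(17) f(20) f(22) by (simp; linarith)
              qed
            next
              assume v11: "m11 = 1"
              from d(7) show ?thesis
              proof
                assume v20: "m20 = 0"
                show ?thesis using v00 v10 v12 v01 v02 v11 v20 f(4) f(7) f(13) f(17) f(20) f(22) by (simp; linarith)
              next
                assume v20: "m20 = 1"
                show ?thesis using v00 v10 v12 v01 v02 v11 v20 f(4) f(7) f(13) f(17) f(20) f(22) by (simp; linarith)
              qed
            qed
          qed
        qed
      next
        assume v12: "m12 = 1"
        from d(5) show ?thesis
        proof
          assume v11: "m11 = 0"
          from d(8) show ?thesis
          proof
            assume v21: "m21 = 0"
            from d(2) show ?thesis
            proof
              assume v01: "m01 = 0"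
              show ?thesis using v00 v10 v12 v11 v21 v01 f(4) f(7) f(13) f(16) f(21) f(24) by (simp; linarith)
            next
              assume v01: "m01 = 1"
              from d(3) show ?thesis
              proof
                assume v02: "m02 = 0"
                show ?thesis using v00 v10 v12 v11 v21 v01 v02 f(4) f(7) f(13) f(16) f(20) f(24) by (simp; linarith)
              next
                assume v02: "m02 = 1"
                show ?thesis using v00 v10 v12 v11 v21 v01 v02 f(4) f(7) f(13) f(16) f(20) f(24) by (simp; linarith)
              qed
            qed
          next
            assume v21: "m21 = 1"
            from d(7) show ?thesis
            proof
              assume v20: "m20 = 0"
              from d(2) show ?thesis
              proof
                assume v01: "m01 = 0"
                show ?thesis using v00 v10 v12 v11 v21 v20 v01 f(4) f(7) f(13) f(16) f(21) f(23) by (simp; linarith)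
              next
                assume v01: "m01 = 1"
                show ?thesis using v00 v10 v12 v11 v21 v20 v01 f(4) f(7) f(13) f(16) f(21) f(23) by (simp; linarith)
              qed
            next
              assume v20: "m20 = 1"
              show ?thesis using v00 v10 v12 v11 v21 v20 f(4) f(7) f(15) f(16) f(21) f(22) by (simp; linarith)
            qed
          qed
        next
          assume v11: "m11 = 1"
          from d(2) show ?thesis
          proof
            assume v01: "m01 = 0"
            from d(7) show ?thesis
            proof
              assume v20: "m20 = 0"
              show ?thesis using v00 v10 v12 v11 v01 v20 f(4) f(7) f(13) f(16) f(21) f(22) by (simp; linarith)
            next
              assume v20: "m20 = 1"
              show ?thesis using v00 v10 v12 v11 v01 v20 f(4) f(7) f(13) f(16) f(21) f(22) by (simp; linarith)
            qed
          next
            assume v01: "m01 = 1"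
            from d(7) show ?thesis
            proof
              assume v20: "m20 = 0"
              show ?thesis using v00 v10 v12 v11 v01 v20 f(4) f(7) f(13) f(16) f(21) f(22) by (simp; linarith)
            next
              assume v20: "m20 = 1"
              show ?thesis using v00 v10 v12 v11 v01 v20 f(4) f(7) f(13) f(16) f(21) f(22) by (simp; linarith)
            qed
          qed
        qed
      qed
    qed
  next
    assume v00: "m00 = 1"
    from d(2) show ?thesis
    proof
      assume v01: "m01 = 0"
      from d(8) show ?thesis
      proof
        assume v21: "m21 = 0"
        from d(5) show ?thesis
        proof
          assume v11: "m11 = 0"
          from d(3) show ?thesis
          proof
            assume v02: "m02 = 0"
            from d(4) show ?thesis
            proof
              assume v10: "m10 = 0"
              show ?thesis using v00 v01 v21 v11 v02 v10 f(1) f(10) f(13) f(16) f(19) f(24) by (simp; linarith)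
            next
              assume v10: "m10 = 1"
              show ?thesis using v00 v01 v21 v11 v02 v10 f(1) f(10) f(13) f(16) f(19) f(24) by (simp; linarith)
            qed
          next
            assume v02: "m02 = 1"
            from d(4) show ?thesis
            proof
              assume v10: "m10 = 0"
              show ?thesis using v00 v01 v21 v11 v02 v10 f(1) f(10) f(13) f(16) f(19) f(24) by (simp; linarith)
            next
              assume v10: "m10 = 1"
              show ?thesis using v00 v01 v21 v11 v02 v10 f(1) f(10) f(13) f(16) f(19) f(24) by (simp; linarith)
            qed
          qed
        next
          assume v11: "m11 = 1"
          from d(6) show ?thesis
          proof
            assume v12: "m12 = 0"
            from d(3) show ?thesis
            proof
              assume v02: "m02 = 0"
              show ?thesis using v00 v01 v21 v11 v12 v02 f(1) f(10) f(13) f(18) f(19) f(24) by (simp; linarith)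
            next
              assume v02: "m02 = 1"
              from d(4) show ?thesis
              proof
                assume v10: "m10 = 0"
                show ?thesis using v00 v01 v21 v11 v12 v02 v10 f(1) f(10) f(13) f(16) f(20) f(24) by (simp; linarith)
              next
                assume v10: "m10 = 1"
                show ?thesis using v00 v01 v21 v11 v12 v02 v10 f(1) f(10) f(13) f(16) f(20) f(24) by (simp; linarith)
              qed
            qed
          next
            assume v12: "m12 = 1"
            from d(4) show ?thesis
            proof
              assume v10: "m10 = 0"
              from d(3) show ?thesis
              proof
                assume v02: "m02 = 0"
                show ?thesis using v00 v01 v21 v11 v12 v10 v02 f(1) f(10) f(13) f(17) f(20) f(24) by (simp; linarith)
              next
                assume v02: "m02 = 1"
                show ?thesis using v00 v01 v21 v11 v12 v10 v02 f(1) f(10) f(13) f(16) f(20) f(24) by (simp; linarith)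
              qed
            next
              assume v10: "m10 = 1"
              show ?thesis using v00 v01 v21 v11 v12 v10 f(1) f(10) f(13) f(16) f(21) f(24) by (simp; linarith)
            qed
          qed
        qed
      next
        assume v21: "m21 = 1"
        from d(4) show ?thesis
        proof
          assume v10: "m10 = 0"
          from d(3) show ?thesis
          proof
            assume v02: "m02 = 0"
            from d(7) show ?thesis
            proof
              assume v20: "m20 = 0"
              from d(5) show ?thesis
              proof
                assume v11: "m11 = 0"
                show ?thesis using v00 v01 v21 v10 v02 v20 v11 f(1) f(10) f(14) f(16) f(19) f(23) by (simp; linarith)
              next
                assume v11: "m11 = 1"
                show ?thesis using v00 v01 v21 v10 v02 v20 v11 f(1) f(10) f(14) f(16) f(19) f(23) by (simp; linarith)
              qed
            next
              assume v20: "m20 = 1"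
              show ?thesis using v00 v01 v21 v10 v02 v20 f(1) f(10) f(15) f(16) f(19) f(22) by (simp; linarith)
            qed
          next
            assume v02: "m02 = 1"
            from d(7) show ?thesis
            proof
              assume v20: "m20 = 0"
              from d(5) show ?thesis
              proof
                assume v11: "m11 = 0"
                show ?thesis using v00 v01 v21 v10 v02 v20 v11 f(1) f(10) f(14) f(16) f(19) f(23) by (simp; linarith)
              next
                assume v11: "m11 = 1"
                show ?thesis using v00 v01 v21 v10 v02 v20 v11 f(1) f(10) f(14) f(16) f(19) f(23) by (simp; linarith)
              qed
            next
              assume v20: "m20 = 1"
              show ?thesis using v00 v01 v21 v10 v02 v20 f(1) f(10) f(15) f(16) f(19) f(22) by (simp; linarith)
            qed
          qed
        next
          assume v10: "m10 = 1"
          from d(5) show ?thesis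
          proof
            assume v11: "m11 = 0"
            from d(3) show ?thesis
            proof
              assume v02: "m02 = 0"
              from d(7) show ?thesis
              proof
                assume v20: "m20 = 0"
                show ?thesis using v00 v01 v21 v10 v11 v02 v20 f(1) f(10) f(14) f(16) f(19) f(23) by (simp; linarith)
              next
                assume v20: "m20 = 1"
                show ?thesis using v00 v01 v21 v10 v11 v02 v20 f(1) f(10) f(15) f(16) f(19) f(22) by (simp; linarith)
              qed
            next
              assume v02: "m02 = 1"
              from d(7) show ?thesis
              proof
                assume v20: "m20 = 0"
                show ?thesis using v00 v01 v21 v10 v11 v02 v20 f(1) f(10) f(14) f(16) f(19) f(23) by (simp; linarith)
              next
                assume v20: "m20 = 1"
                show ?thesis using v00 v01 v21 v10 v11 v02 v20 f(1) f(10) f(15) f(16) f(19) f(22) by (simp; linarith)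
              qed
            qed
          next
            assume v11: "m11 = 1"
            from d(6) show ?thesis
            proof
              assume v12: "m12 = 0"
              from d(3) show ?thesis
              proof
                assume v02: "m02 = 0"
                show ?thesis using v00 v01 v21 v10 v11 v12 v02 f(1) f(10) f(13) f(18) f(19) f(24) by (simp; linarith)
              next
                assume v02: "m02 = 1"
                show ?thesis using v00 v01 v21 v10 v11 v12 v02 f(1) f(10) f(13) f(16) f(20) f(24) by (simp; linarith)
              qed
            next
              assume v12: "m12 = 1"
              show ?thesis using v00 v01 v21 v10 v11 v12 f(1) f(10) f(13) f(16) f(21) f(24) by (simp; linarith)
            qed
          qed
        qed
      qed
    next
      assume v01: "m01 = 1"
      from d(3) show ?thesis
      proof
        assume v02: "m02 = 0"
        from d(4) show ?thesis
        proof
          assume v10: "m10 = 0"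
          from d(7) show ?thesis
          proof
            assume v20: "m20 = 0"
            show ?thesis using v00 v01 v02 v10 v20 f(1) f(12) f(13) f(16) f(19) f(22) by (simp; linarith)
          next
            assume v20: "m20 = 1"
            show ?thesis using v00 v01 v02 v10 v20 f(1) f(12) f(13) f(16) f(19) f(22) by (simp; linarith)
          qed
        next
          assume v10: "m10 = 1"
          from d(7) show ?thesis
          proof
            assume v20: "m20 = 0"
            show ?thesis using v00 v01 v02 v10 v20 f(1) f(12) f(13) f(16) f(19) f(22) by (simp; linarith)
          next
            assume v20: "m20 = 1"
            show ?thesis using v00 v01 v02 v10 v20 f(1) f(12) f(13) f(16) f(19) f(22) by (simp; linarith)
          qed
        qed
      next
        assume v02: "m02 = 1"
        from d(4) show ?thesis
        proof
          assume v10: "m10 = 0"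
          from d(7) show ?thesis
          proof
            assume v20: "m20 = 0"
            show ?thesis using v00 v01 v02 v10 v20 f(1) f(7) f(13) f(16) f(19) f(22) by (simp; linarith)
          next
            assume v20: "m20 = 1"
            show ?thesis using v00 v01 v02 v10 v20 f(1) f(7) f(13) f(16) f(19) f(22) by (simp; linarith)
          qed
        next
          assume v10: "m10 = 1"
          from d(7) show ?thesis
          proof
            assume v20: "m20 = 0"
            show ?thesis using v00 v01 v02 v10 v20 f(1) f(7) f(13) f(16) f(19) f(22) by (simp; linarith)
          next
            assume v20: "m20 = 1"
            show ?thesis using v00 v01 v02 v10 v20 f(1) f(7) f(13) f(16) f(19) f(22) by (simp; linarith)
          qed
        qed
      qed
    qed
  qed
qed

lemma lbexp_det:
  assumes "M \<in> det_policies Aex Aex"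
  shows "1/2 \<le> lbexp M"
proof -
  have pol: "M \<in> policies Aex Aex" and d: "\<forall>i x y. M i x y \<in> {0,1}"
    using assms by (auto simp: det_policies_def)
  have M2: "M 2 x y = 1 - M 1 x y" if "x \<in> ext_actions Aex" "y \<in> ext_actions Aex" for x y
    using pol that unfolding policies_def by force
  have M2': "M 2 x y = 1 - M 1 x y" if "x \<in> {None, Some 1, Some 2}" "y \<in> {None, Some 1, Some 2}" for x y
    using M2 that by (simp add: extA)
  have F1: "\<forall>r\<in>ext_actions (Cl s). \<forall>r'\<in>ext_actions (Cl s). Min ((\<lambda>c. (M 1 r c + M 1 r' c)/2) ` ext_actions (Cw s)) \<le> lbv (ext_actions (Cl s)) (ext_actions (Cw s)) (M 1)" for s
    by (intro ballI lbv_cand ext_fin Cl_fin Cw_fin)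
  have F2: "\<forall>r\<in>ext_actions (Cl s). \<forall>r'\<in>ext_actions (Cl s). Min ((\<lambda>c. (M 2 c r + M 2 c r')/2) ` ext_actions (Cw s)) \<le> lbv (ext_actions (Cl s)) (ext_actions (Cw s)) (\<lambda>y x. M 2 x y)" for s
    by (intro ballI lbv_cand[where g = "\<lambda>y x. M 2 x y", simplified] ext_fin Cl_fin Cw_fin)
  have E: "lbexp M = 1/5 * (lbv (ext_actions (Cl 0)) (ext_actions (Cw 0)) (M 1) + lbv (ext_actions (Cl 0)) (ext_actions (Cw 0)) (\<lambda>y x. M 2 x y))
     + 1/10 * (lbv (ext_actions (Cl 1)) (ext_actions (Cw 1)) (M 1) + lbv (ext_actions (Cl 1)) (ext_actions (Cw 1)) (\<lambda>y x. M 2 x y))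
     + 1/5 * (lbv (ext_actions (Cl 2)) (ext_actions (Cw 2)) (M 1) + lbv (ext_actions (Cl 2)) (ext_actions (Cw 2)) (\<lambda>y x. M 2 x y))"
    by (simp add: lbexp_def Sex_def Pex_def field_simps)
  define L01 where "L01 = lbv (ext_actions (Cl 0)) (ext_actions (Cw 0)) (M 1)"
  define L02 where "L02 = lbv (ext_actions (Cl 0)) (ext_actions (Cw 0)) (\<lambda>y x. M 2 x y)"
  define L11 where "L11 = lbv (ext_actions (Cl 1)) (ext_actions (Cw 1)) (M 1)"
  define L12 where "L12 = lbv (ext_actions (Cl 1)) (ext_actions (Cw 1)) (\<lambda>y x. M 2 x y)"
  define L21 where "L21 = lbv (ext_actions (Cl 2)) (ext_actions (Cw 2)) (M 1)"
  define L22 where "L22 = lbv (ext_actions (Cl 2)) (ext_actions (Cw 2)) (\<lambda>y x. M 2 x y)"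
  note G = F1[of 0, folded L01_def] F1[of 1, folded L11_def] F1[of 2, folded L21_def]
    F2[of 0, folded L02_def] F2[of 1, folded L12_def] F2[of 2, folded L22_def]
  note E' = E[folded L01_def L02_def L11_def L12_def L21_def L22_def]
  have H: "min (x::real) y \<le> L \<longleftrightarrow> x \<le> L \<or> y \<le> L" for x y L by auto
  have v: "\<And>x y. M 1 x y = 0 \<or> M 1 x y = 1" using d by auto
  have "5 \<le> 2 * (L01 + L02) + (L11 + L12) + 2 * (L21 + L22)"
    apply (rule core[of "M 1 None None" "M 1 None (Some 1)" "M 1 None (Some 2)"
       "M 1 (Some 1) None" "M 1 (Some 1) (Some 1)" "M 1 (Some 1) (Some 2)"
       "M 1 (Some 2) None" "M 1 (Some 2) (Some 1)" "M 1 (Some 2) (Some 2)"])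
    apply (fact v)+
    using G by (simp_all add: Cl_def Cw_def ext_actions_def M2')
  then show ?thesis using E' by (simp add: field_simps)
qed


lemma bil_le2:
  assumes "p \<in> mixed R" "q \<in> mixed C" "\<forall>y\<in>C. (\<Sum>x\<in>R. p x * g x y) \<le> c"
  shows "(\<Sum>x\<in>R. \<Sum>y\<in>C. p x * q y * g x y) \<le> c"
  unfolding bil_swap using assms by (intro mixed_sum_le) auto

lemma bil_ge2:
  assumes "p \<in> mixed R" "q \<in> mixed C" "\<forall>x\<in>R. c \<le> (\<Sum>y\<in>C. q y * g x y)"
  shows "c \<le> (\<Sum>x\<in>R. \<Sum>y\<in>C. p x * q y * g x y)"
  unfolding bil_noswap using assms by (intro mixed_sum_ge) auto

lemma pay_bounds:
  assumes "M \<in> policies A A" "U1 \<subseteq> A" "U2 \<subseteq> A" "i \<in> {1,2}"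
  shows "0 \<le> bg_payoff M i U1 U2 a1 a2 \<and> bg_payoff M i U1 U2 a1 a2 \<le> 1"
proof -
  have "available U1 a1 \<Longrightarrow> a1 \<in> ext_actions A" "available U2 a2 \<Longrightarrow> a2 \<in> ext_actions A"
    using ext_mono[OF assms(2)] ext_mono[OF assms(3)] by (auto simp: available_def)
  then show ?thesis using pol_bounds[OF assms(1) _ _ assms(4)] assms(4)
    unfolding bg_payoff_def Let_def by auto
qed

lemma Pex_pmf: "is_pmf_on Sex Pex"
  by (simp add: is_pmf_on_def Sex_def Pex_def)

lemma exp_bounds:
  assumes "M \<in> policies Aex Aex" "\<forall>s\<in>Sex. U1 s \<subseteq> Aex \<and> U2 s \<subseteq> Aex" "i \<in> {1,2}"
    "\<sigma>1 \<in> bg_strategies Aex (U1 ` Sex)" "\<sigma>2 \<in> bg_strategies Aex (U2 ` Sex)"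
  shows "0 \<le> bg_expected Aex Sex Pex U1 U2 M i \<sigma>1 \<sigma>2 \<and> bg_expected Aex Sex Pex U1 U2 M i \<sigma>1 \<sigma>2 \<le> 1"
proof -
  have B: "0 \<le> (\<Sum>a1\<in>ext_actions Aex. \<Sum>a2\<in>ext_actions Aex. \<sigma>1 (U1 s) a1 * \<sigma>2 (U2 s) a2 * bg_payoff M i (U1 s) (U2 s) a1 a2)
     \<and> (\<Sum>a1\<in>ext_actions Aex. \<Sum>a2\<in>ext_actions Aex. \<sigma>1 (U1 s) a1 * \<sigma>2 (U2 s) a2 * bg_payoff M i (U1 s) (U2 s) a1 a2) \<le> 1"
    if s: "s \<in> Sex" for s
    using assms s pay_bounds[OF assms(1) _ _ assms(3)]
    by (intro bil_bounds) (auto simp: bg_strategies_def)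
  have P0: "\<forall>s\<in>Sex. 0 \<le> Pex s" by (simp add: Pex_def)
  show ?thesis
  proof
    show "0 \<le> bg_expected Aex Sex Pex U1 U2 M i \<sigma>1 \<sigma>2"
      unfolding bg_expected_def apply (rule sum_nonneg) apply (rule mult_nonneg_nonneg) using B P0 by auto
    have "bg_expected Aex Sex Pex U1 U2 M i \<sigma>1 \<sigma>2 \<le> (\<Sum>s\<in>Sex. Pex s * 1)"
      unfolding bg_expected_def apply (rule sum_mono) apply (rule mult_left_mono) using B P0 by auto
    also have "\<dots> = 1" using Pex_pmf by (simp add: is_pmf_on_def)
    finally show "bg_expected Aex Sex Pex U1 U2 M i \<sigma>1 \<sigma>2 \<le> 1" .
  qed
qed

definition sdef :: "nat set \<Rightarrow> nat option \<Rightarrow> real" where "sdef T = pr2 None None"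

lemma sdef_strat: "sdef \<in> bg_strategies Aex Ts"
  unfolding bg_strategies_def sdef_def by (auto intro!: pr2_mixed ext_fin simp: Aex_def ext_actions_def)

lemma CwCl_sub: "\<forall>s\<in>Sex. Cl s \<subseteq> Aex \<and> Cw s \<subseteq> Aex" "\<forall>s\<in>Sex. Cw s \<subseteq> Aex \<and> Cl s \<subseteq> Aex"
  using Cl_sub Cw_sub by auto

lemma bgv_nonneg:
  assumes "M \<in> policies Aex Aex" "\<forall>s\<in>Sex. U1 s \<subseteq> Aex \<and> U2 s \<subseteq> Aex" "i \<in> {1,2}"
  shows "0 \<le> bg_value Aex Sex Pex U1 U2 M i"
proof -
  have i: "i = 1 \<or> i = 2" using assms(3) by auto
  note e1 = exp_bounds[OF assms(1,2), of 1] and e2 = exp_bounds[OF assms(1,2), of 2]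
  show ?thesis
  proof (cases "i = 1")
    case True
    then show ?thesis unfolding bg_value_def
      using e1 sdef_strat
      by (simp, intro supinf_ge[where xo=sdef and hi=1 and lo=0]) auto
  next
    case False
    then show ?thesis unfolding bg_value_def
      using e2 sdef_strat i
      by (simp, intro supinf_ge[where xo=sdef and hi=1 and lo=0]) auto
  qed
qed

lemma piddg_nonneg: "M \<in> policies Aex Aex \<Longrightarrow> 0 \<le> piddg_err Aex Sex Pex Cw Cl M"
  unfolding piddg_err_def using bgv_nonneg CwCl_sub by (simp add: add_nonneg_nonneg)

lemma exp_le:
  assumes "\<forall>s\<in>Sex. \<sigma>1 (U1 s) \<in> mixed (ext_actions Aex) \<and> \<sigma>2 (U2 s) \<in> mixed (ext_actions Aex)"
    "\<forall>s\<in>Sex. \<forall>a1\<in>ext_actions Aex. (\<Sum>a2\<in>ext_actions Aex. \<sigma>2 (U2 s) a2 * bg_payoff M i (U1 s) (U2 s) a1 a2) \<le> c s"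
  shows "bg_expected Aex Sex Pex U1 U2 M i \<sigma>1 \<sigma>2 \<le> (\<Sum>s\<in>Sex. Pex s * c s)"
  unfolding bg_expected_def
  apply (rule sum_mono) apply (rule mult_left_mono) 
   apply (rule bil_le) using assms by (auto simp: Pex_def)

lemma exp_le2:
  assumes "\<forall>s\<in>Sex. \<sigma>1 (U1 s) \<in> mixed (ext_actions Aex) \<and> \<sigma>2 (U2 s) \<in> mixed (ext_actions Aex)"
    "\<forall>s\<in>Sex. \<forall>a2\<in>ext_actions Aex. (\<Sum>a1\<in>ext_actions Aex. \<sigma>1 (U1 s) a1 * bg_payoff M i (U1 s) (U2 s) a1 a2) \<le> c s"
  shows "bg_expected Aex Sex Pex U1 U2 M i \<sigma>1 \<sigma>2 \<le> (\<Sum>s\<in>Sex. Pex s * c s)"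
  unfolding bg_expected_def
  apply (rule sum_mono) apply (rule mult_left_mono) 
   apply (rule bil_le2) using assms by (auto simp: Pex_def)

lemma exp_ge:
  assumes "\<forall>s\<in>Sex. \<sigma>1 (U1 s) \<in> mixed (ext_actions Aex) \<and> \<sigma>2 (U2 s) \<in> mixed (ext_actions Aex)"
    "\<forall>s\<in>Sex. \<forall>a1\<in>ext_actions Aex. c s \<le> (\<Sum>a2\<in>ext_actions Aex. \<sigma>2 (U2 s) a2 * bg_payoff M i (U1 s) (U2 s) a1 a2)"
  shows "(\<Sum>s\<in>Sex. Pex s * c s) \<le> bg_expected Aex Sex Pex U1 U2 M i \<sigma>1 \<sigma>2"
  unfolding bg_expected_def
  apply (rule sum_mono) apply (rule mult_left_mono) 
   apply (rule bil_ge2) using assms by (auto simp: Pex_def)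

lemma exp_ge2:
  assumes "\<forall>s\<in>Sex. \<sigma>1 (U1 s) \<in> mixed (ext_actions Aex) \<and> \<sigma>2 (U2 s) \<in> mixed (ext_actions Aex)"
    "\<forall>s\<in>Sex. \<forall>a2\<in>ext_actions Aex. c s \<le> (\<Sum>a1\<in>ext_actions Aex. \<sigma>1 (U1 s) a1 * bg_payoff M i (U1 s) (U2 s) a1 a2)"
  shows "(\<Sum>s\<in>Sex. Pex s * c s) \<le> bg_expected Aex Sex Pex U1 U2 M i \<sigma>1 \<sigma>2"
  unfolding bg_expected_def
  apply (rule sum_mono) apply (rule mult_left_mono) 
   apply (rule bil_ge) using assms by (auto simp: Pex_def)

definition tau2 :: "nat set \<Rightarrow> nat option \<Rightarrow> real" where
  "tau2 T = (if T = {1,2} then pr2 (Some 1) (Some 1) else pr2 None None)"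
definition tau1 :: "nat set \<Rightarrow> nat option \<Rightarrow> real" where
  "tau1 T = (if T = {} then pr2 None None else if T = {1} then pr2 (Some 1) (Some 1) else q23)"

lemma q23_mixedA: "q23 \<in> mixed (ext_actions Aex)"
  by (simp add: mixed_def q23_def Aex_def ext_actions_def)

lemma tau2_strat: "tau2 \<in> bg_strategies Aex Ts"
  unfolding bg_strategies_def tau2_def by (auto intro!: pr2_mixed ext_fin simp: Aex_def ext_actions_def)
lemma tau1_strat: "tau1 \<in> bg_strategies Aex Ts"
  unfolding bg_strategies_def tau1_def using q23_mixedA by (auto intro!: pr2_mixed ext_fin simp: Aex_def ext_actions_def)

lemma strat_mixed: "\<sigma> \<in> bg_strategies A (U ` S) \<Longrightarrow> s \<in> S \<Longrightarrow> \<sigma> (U s) \<in> mixed (ext_actions A)"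
  unfolding bg_strategies_def by auto

lemma CwCl_vals: "Cw 0 = {}" "Cw 1 = {1}" "Cw 2 = {1,2}" "Cl 0 = {1,2}" "Cl 1 = {2}" "Cl 2 = {1}"
  by (simp_all add: Cw_def Cl_def)

lemma avail_simps:
  "available {} x \<longleftrightarrow> x = None"
  "available {1} x \<longleftrightarrow> x = None \<or> x = Some 1"
  "available {2} x \<longleftrightarrow> x = None \<or> x = Some 2"
  "available {1,2} x \<longleftrightarrow> x = None \<or> x = Some 1 \<or> x = Some 2"
  for x :: "nat option"
  by (auto simp: available_def ext_actions_def)

lemma Mst_simps:
  "Mst 1 None None = 0" "Mst 1 None (Some 1) = 0" "Mst 1 None (Some 2) = 0"
  "Mst 1 (Some 1) None = 1/2" "Mst 1 (Some 1) (Some 1) = 0" "Mst 1 (Some 1) (Some 2) = 1/2"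
  "Mst 1 (Some 2) None = 0" "Mst 1 (Some 2) (Some 1) = 1" "Mst 1 (Some 2) (Some 2) = 0"
  "Mst 2 None None = 1" "Mst 2 None (Some 1) = 1" "Mst 2 None (Some 2) = 1"
  "Mst 2 (Some 1) None = 1/2" "Mst 2 (Some 1) (Some 1) = 1" "Mst 2 (Some 1) (Some 2) = 1/2"
  "Mst 2 (Some 2) None = 1" "Mst 2 (Some 2) (Some 1) = 0" "Mst 2 (Some 2) (Some 2) = 1"
  by (simp_all add: Mst_def tab_def extA)

lemma tau_vals: "tau2 {} = pr2 None None" "tau2 {1} = pr2 None None" "tau2 {1,2} = pr2 (Some 1) (Some 1)"
  "tau1 {} = pr2 None None" "tau1 {1} = pr2 (Some 1) (Some 1)" "tau1 {1,2} = q23"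
  by (auto simp: tau2_def tau1_def)

lemma sum3: "(\<Sum>x\<in>{None, Some 1, Some (2::nat)}. f x) = f None + f (Some 1) + f (Some 2)"
  by (simp add: add.assoc del: One_nat_def)

lemma pr2_vals: "pr2 r r' x = (if x = r then 1/2 else 0) + (if x = r' then 1/2 else 0)" by (simp add: pr2_def)

lemma t1_0: "\<forall>a1\<in>{None, Some 1, Some 2}. (\<Sum>a2\<in>{None, Some 1, Some 2}. tau2 (Cw 0) a2 * bg_payoff Mst 1 (Cl 0) (Cw 0) a1 a2) \<le> 1/2"
  by (simp add: CwCl_vals tau_vals sum3 bg_payoff_def Let_def avail_simps Mst_simps pr2_vals del: One_nat_def)

lemma t2_0: "\<forall>a2\<in>{None, Some 1, Some 2}. (\<Sum>a1\<in>{None, Some 1, Some 2}. tau1 (Cw 0) a1 * bg_payoff Mst 2 (Cw 0) (Cl 0) a1 a2) \<le> 1"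
  by (simp add: CwCl_vals tau_vals sum3 bg_payoff_def Let_def avail_simps Mst_simps pr2_vals q23_def del: One_nat_def)

lemma t1_1: "\<forall>a1\<in>{None, Some 1, Some 2}. (\<Sum>a2\<in>{None, Some 1, Some 2}. tau2 (Cw 1) a2 * bg_payoff Mst 1 (Cl 1) (Cw 1) a1 a2) \<le> 0"
  by (simp add: CwCl_vals tau_vals sum3 bg_payoff_def Let_def avail_simps Mst_simps pr2_vals del: One_nat_def)

lemma t2_1: "\<forall>a2\<in>{None, Some 1, Some 2}. (\<Sum>a1\<in>{None, Some 1, Some 2}. tau1 (Cw 1) a1 * bg_payoff Mst 2 (Cw 1) (Cl 1) a1 a2) \<le> 1/2"
  by (simp add: CwCl_vals tau_vals sum3 bg_payoff_def Let_def avail_simps Mst_simps pr2_vals q23_def del: One_nat_def)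

lemma t1_2: "\<forall>a1\<in>{None, Some 1, Some 2}. (\<Sum>a2\<in>{None, Some 1, Some 2}. tau2 (Cw 2) a2 * bg_payoff Mst 1 (Cl 2) (Cw 2) a1 a2) \<le> 0"
  by (simp add: CwCl_vals tau_vals sum3 bg_payoff_def Let_def avail_simps Mst_simps pr2_vals del: One_nat_def)

lemma t2_2: "\<forall>a2\<in>{None, Some 1, Some 2}. (\<Sum>a1\<in>{None, Some 1, Some 2}. tau1 (Cw 2) a1 * bg_payoff Mst 2 (Cw 2) (Cl 2) a1 a2) \<le> 2/3"
  by (simp add: CwCl_vals tau_vals sum3 bg_payoff_def Let_def avail_simps Mst_simps pr2_vals q23_def del: One_nat_def)

lemma t1: "\<forall>s\<in>Sex. \<forall>a1\<in>ext_actions Aex. (\<Sum>a2\<in>ext_actions Aex. tau2 (Cw s) a2 * bg_payoff Mst 1 (Cl s) (Cw s) a1 a2) \<le> (if s = 0 then 1/2 else 0)"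
proof
  fix s assume "s \<in> Sex"
  then have "s = 0 \<or> s = 1 \<or> s = 2" by (auto simp: Sex_def)
  then show "\<forall>a1\<in>ext_actions Aex. (\<Sum>a2\<in>ext_actions Aex. tau2 (Cw s) a2 * bg_payoff Mst 1 (Cl s) (Cw s) a1 a2) \<le> (if s = 0 then 1/2 else 0)"
    unfolding extA using t1_0 t1_1 t1_2 by (elim disjE) simp_all
qed

lemma t2: "\<forall>s\<in>Sex. \<forall>a2\<in>ext_actions Aex. (\<Sum>a1\<in>ext_actions Aex. tau1 (Cw s) a1 * bg_payoff Mst 2 (Cw s) (Cl s) a1 a2) \<le> (if s = 0 then 1 else if s = 1 then 1/2 else 2/3)"
proof
  fix s assume "s \<in> Sex"
  then have "s = 0 \<or> s = 1 \<or> s = 2" by (auto simp: Sex_def)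
  then show "\<forall>a2\<in>ext_actions Aex. (\<Sum>a1\<in>ext_actions Aex. tau1 (Cw s) a1 * bg_payoff Mst 2 (Cw s) (Cl s) a1 a2) \<le> (if s = 0 then 1 else if s = 1 then 1/2 else 2/3)"
    unfolding extA using t2_0 t2_1 t2_2 by (elim disjE) simp_all
qed

lemma eq1: "bg_value Aex Sex Pex Cl Cw Mst 1 = (SUP \<sigma>1\<in>bg_strategies Aex (Cl ` Sex). INF \<sigma>2\<in>bg_strategies Aex (Cw ` Sex). bg_expected Aex Sex Pex Cl Cw Mst 1 \<sigma>1 \<sigma>2)"
    by (simp add: bg_value_def)
lemma c1: "(\<Sum>s\<in>Sex. Pex s * (if s = 0 then 1/2 else 0)) = 1/5" by (simp add: Sex_def Pex_def)
lemma L1: "\<forall>x\<in>bg_strategies Aex (Cl ` Sex). \<forall>y\<in>bg_strategies Aex (Cw ` Sex). 0 \<le> bg_expected Aex Sex Pex Cl Cw Mst 1 x y"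
    using exp_bounds[OF Mst_pol CwCl_sub(1), of 1] by blast
lemma M1:
  assumes "x \<in> bg_strategies Aex (Cl ` Sex)"
  shows "\<forall>s\<in>Sex. x (Cl s) \<in> mixed (ext_actions Aex) \<and> tau2 (Cw s) \<in> mixed (ext_actions Aex)"
proof
  fix s assume s: "s \<in> Sex"
  show "x (Cl s) \<in> mixed (ext_actions Aex) \<and> tau2 (Cw s) \<in> mixed (ext_actions Aex)"
    using strat_mixed[OF assms s] strat_mixed[OF tau2_strat s] by blast
qed

lemma B0: "x \<in> bg_strategies Aex (Cl ` Sex) \<Longrightarrow> bg_expected Aex Sex Pex Cl Cw Mst 1 x tau2 \<le> (\<Sum>s\<in>Sex. Pex s * (if s = 0 then 1/2 else 0))"
  by (rule exp_le[where c = "\<lambda>s. if s = 0 then 1/2 else 0", OF M1 t1])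
lemma v1_Mst: "bg_value Aex Sex Pex Cl Cw Mst 1 \<le> 1/5"
proof -
  have B: "\<forall>x\<in>bg_strategies Aex (Cl ` Sex). bg_expected Aex Sex Pex Cl Cw Mst 1 x tau2 \<le> 1/5"
  proof
    fix x assume x: "x \<in> bg_strategies Aex (Cl ` Sex)"
    show "bg_expected Aex Sex Pex Cl Cw Mst 1 x tau2 \<le> 1/5" using B0[OF x] unfolding c1 .
  qed
  have ne: "bg_strategies Aex (Cl ` Sex) \<noteq> {}" using sdef_strat by blast
  show ?thesis unfolding eq1
    by (rule supinf_le[where lo=0 and f = "\<lambda>x y. bg_expected Aex Sex Pex Cl Cw Mst 1 x y" and Y = "bg_strategies Aex (Cw ` Sex)", OF ne tau2_strat L1 B])
qed
lemma eq2: "bg_value Aex Sex Pex Cw Cl Mst 2 = (SUP \<sigma>2\<in>bg_strategies Aex (Cl ` Sex). INF \<sigma>1\<in>bg_strategies Aex (Cw ` Sex). bg_expected Aex Sex Pex Cw Cl Mst 2 \<sigma>1 \<sigma>2)"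
    by (simp add: bg_value_def)
lemma c2: "(\<Sum>s\<in>Sex. Pex s * (if s = 0 then 1 else if s = 1 then 1/2 else 2/3)) = 23/30" by (simp add: Sex_def Pex_def)
lemma L2: "\<forall>x\<in>bg_strategies Aex (Cl ` Sex). \<forall>y\<in>bg_strategies Aex (Cw ` Sex). 0 \<le> bg_expected Aex Sex Pex Cw Cl Mst 2 y x"
    using exp_bounds[OF Mst_pol CwCl_sub(2), of 2] by blast
lemma M2:
  assumes "x \<in> bg_strategies Aex (Cl ` Sex)"
  shows "\<forall>s\<in>Sex. tau1 (Cw s) \<in> mixed (ext_actions Aex) \<and> x (Cl s) \<in> mixed (ext_actions Aex)"
proof
  fix s assume s: "s \<in> Sex"
  show "tau1 (Cw s) \<in> mixed (ext_actions Aex) \<and> x (Cl s) \<in> mixed (ext_actions Aex)"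
    using strat_mixed[OF assms s] strat_mixed[OF tau1_strat s] by blast
qed
lemma B0': "x \<in> bg_strategies Aex (Cl ` Sex) \<Longrightarrow> bg_expected Aex Sex Pex Cw Cl Mst 2 tau1 x \<le> (\<Sum>s\<in>Sex. Pex s * (if s = 0 then 1 else if s = 1 then 1/2 else 2/3))"
  by (rule exp_le2[where c = "\<lambda>s. if s = 0 then 1 else if s = 1 then 1/2 else 2/3", OF M2 t2])

lemma v2_Mst: "bg_value Aex Sex Pex Cw Cl Mst 2 \<le> 23/30"
proof -
  have B: "\<forall>x\<in>bg_strategies Aex (Cl ` Sex). bg_expected Aex Sex Pex Cw Cl Mst 2 tau1 x \<le> 23/30"
  proof
    fix x assume x: "x \<in> bg_strategies Aex (Cl ` Sex)"
    show "bg_expected Aex Sex Pex Cw Cl Mst 2 tau1 x \<le> 23/30" using B0'[OF x] unfolding c2 .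
  qed
  have ne: "bg_strategies Aex (Cl ` Sex) \<noteq> {}" using sdef_strat by blast
  show ?thesis unfolding eq2
    by (rule supinf_le[where lo=0 and f = "\<lambda>x y. bg_expected Aex Sex Pex Cw Cl Mst 2 y x" and Y = "bg_strategies Aex (Cw ` Sex)", OF ne tau1_strat L2 B])
qed

lemma piddg_Mst: "piddg_err Aex Sex Pex Cw Cl Mst \<le> 29/60"
  unfolding piddg_err_def using v1_Mst v2_Mst by simp
lemma pay1_own: "available U1 a1 \<Longrightarrow> bg_payoff M 1 U1 U2 a1 a2 = (if available U2 a2 then M 1 a1 a2 else 1)"
  by (simp add: bg_payoff_def Let_def)
lemma pay2_own: "available U2 a2 \<Longrightarrow> bg_payoff M 2 U1 U2 a1 a2 = (if available U1 a1 then M 2 a1 a2 else 1)"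
  by (simp add: bg_payoff_def Let_def)

definition sel :: "nat set \<Rightarrow> nat" where "sel T = (if T = Cl 0 then 0 else if T = Cl 1 then 1 else 2)"
lemma sel_Cl: "s \<in> Sex \<Longrightarrow> sel (Cl s) = s"
  by (auto simp: Sex_def sel_def Cl_def)

lemma extA_fin: "finite (ext_actions Aex)" by (simp add: extA)

lemma v_lb:
  fixes g :: "nat option \<Rightarrow> nat option \<Rightarrow> real"
  shows "\<exists>\<sigma>. \<sigma> \<in> bg_strategies Aex (Cl ` Sex) \<and>
    (\<forall>s\<in>Sex. \<exists>r r'. \<sigma> (Cl s) = pr2 r r' \<and> r \<in> ext_actions (Cl s) \<and> r' \<in> ext_actions (Cl s) \<and>
        (\<forall>c\<in>ext_actions (Cw s). lbv (ext_actions (Cl s)) (ext_actions (Cw s)) g \<le> (g r c + g r' c)/2))"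
proof -
  have "\<forall>s\<in>Sex. \<exists>r. \<exists>r'. r \<in> ext_actions (Cl s) \<and> r' \<in> ext_actions (Cl s) \<and>
        (\<forall>c\<in>ext_actions (Cw s). lbv (ext_actions (Cl s)) (ext_actions (Cw s)) g \<le> (g r c + g r' c)/2)"
  proof
    fix s assume "s \<in> Sex"
    from lbv_attained[OF ext_fin[OF Cl_fin] ext_fin[OF Cw_fin] ext_ne ext_ne, of s s g]
    show "\<exists>r. \<exists>r'. r \<in> ext_actions (Cl s) \<and> r' \<in> ext_actions (Cl s) \<and>
        (\<forall>c\<in>ext_actions (Cw s). lbv (ext_actions (Cl s)) (ext_actions (Cw s)) g \<le> (g r c + g r' c)/2)"
      by blast
  qed
  then obtain rf where "\<forall>s\<in>Sex. \<exists>r'. rf s \<in> ext_actions (Cl s) \<and> r' \<in> ext_actions (Cl s) \<and>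
        (\<forall>c\<in>ext_actions (Cw s). lbv (ext_actions (Cl s)) (ext_actions (Cw s)) g \<le> (g (rf s) c + g r' c)/2)"
    by (metis (no_types, lifting) bchoice)
  then obtain rf' where rr: "\<forall>s\<in>Sex. rf s \<in> ext_actions (Cl s) \<and> rf' s \<in> ext_actions (Cl s) \<and>
        (\<forall>c\<in>ext_actions (Cw s). lbv (ext_actions (Cl s)) (ext_actions (Cw s)) g \<le> (g (rf s) c + g (rf' s) c)/2)"
    by (metis (no_types, lifting) bchoice)
  define \<sigma> where "\<sigma> T = pr2 (rf (sel T)) (rf' (sel T))" for T
  have 1: "\<sigma> \<in> bg_strategies Aex (Cl ` Sex)"
    unfolding bg_strategies_def
  proof (intro CollectI ballI)
    fix T assume "T \<in> Cl ` Sex"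
    then obtain s where s: "s \<in> Sex" "T = Cl s" by auto
    then show "\<sigma> T \<in> mixed (ext_actions Aex)"
      unfolding \<sigma>_def using sel_Cl[OF s(1)] rr s ext_mono[OF Cl_sub[OF s(1)]]
      by (auto intro!: pr2_mixed extA_fin)
  qed
  have 2: "\<forall>s\<in>Sex. \<exists>r r'. \<sigma> (Cl s) = pr2 r r' \<and> r \<in> ext_actions (Cl s) \<and> r' \<in> ext_actions (Cl s) \<and>
        (\<forall>c\<in>ext_actions (Cw s). lbv (ext_actions (Cl s)) (ext_actions (Cw s)) g \<le> (g r c + g r' c)/2)"
    unfolding \<sigma>_def using rr sel_Cl by auto
  show ?thesis using 1 2 by blast
qed
lemma v1_lb:
  assumes M: "M \<in> policies Aex Aex"
  shows "(\<Sum>s\<in>Sex. Pex s * lbv (ext_actions (Cl s)) (ext_actions (Cw s)) (M 1)) \<le> bg_value Aex Sex Pex Cl Cw M 1"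
proof -
  obtain \<sigma> where \<sigma>: "\<sigma> \<in> bg_strategies Aex (Cl ` Sex)"
    "\<forall>s\<in>Sex. \<exists>r r'. \<sigma> (Cl s) = pr2 r r' \<and> r \<in> ext_actions (Cl s) \<and> r' \<in> ext_actions (Cl s) \<and>
        (\<forall>c\<in>ext_actions (Cw s). lbv (ext_actions (Cl s)) (ext_actions (Cw s)) (M 1) \<le> (M 1 r c + M 1 r' c)/2)"
    using v_lb[of "M 1"] by blast
  have eq: "bg_value Aex Sex Pex Cl Cw M 1 = (SUP \<sigma>1\<in>bg_strategies Aex (Cl ` Sex). INF \<sigma>2\<in>bg_strategies Aex (Cw ` Sex). bg_expected Aex Sex Pex Cl Cw M 1 \<sigma>1 \<sigma>2)"
    by (simp add: bg_value_def)
  have per: "\<forall>s\<in>Sex. \<forall>a2\<in>ext_actions Aex. lbv (ext_actions (Cl s)) (ext_actions (Cw s)) (M 1) \<le> (\<Sum>a1\<in>ext_actions Aex. \<sigma> (Cl s) a1 * bg_payoff M 1 (Cl s) (Cw s) a1 a2)"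
  proof (intro ballI)
    fix s a2 assume s: "s \<in> Sex" and a2: "a2 \<in> ext_actions Aex"
    obtain r r' where rr: "\<sigma> (Cl s) = pr2 r r'" "r \<in> ext_actions (Cl s)" "r' \<in> ext_actions (Cl s)"
      "\<forall>c\<in>ext_actions (Cw s). lbv (ext_actions (Cl s)) (ext_actions (Cw s)) (M 1) \<le> (M 1 r c + M 1 r' c)/2"
      using \<sigma>(2) s by blast
    have rA: "r \<in> ext_actions Aex" "r' \<in> ext_actions Aex" using rr(2,3) ext_mono[OF Cl_sub[OF s]] by auto
    have sum: "(\<Sum>a1\<in>ext_actions Aex. \<sigma> (Cl s) a1 * bg_payoff M 1 (Cl s) (Cw s) a1 a2)
        = (bg_payoff M 1 (Cl s) (Cw s) r a2 + bg_payoff M 1 (Cl s) (Cw s) r' a2) / 2"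
      unfolding rr(1) by (rule sum_pr2[OF extA_fin rA])
    have av: "available (Cl s) r" "available (Cl s) r'" using rr(2,3) by (auto simp: available_def)
    show "lbv (ext_actions (Cl s)) (ext_actions (Cw s)) (M 1) \<le> (\<Sum>a1\<in>ext_actions Aex. \<sigma> (Cl s) a1 * bg_payoff M 1 (Cl s) (Cw s) a1 a2)"
    proof (cases "available (Cw s) a2")
      case True
      then have "a2 \<in> ext_actions (Cw s)" by (simp add: available_def)
      then show ?thesis using rr(4) unfolding sum pay1_own[OF av(1)] pay1_own[OF av(2)] using True by auto
    next
      case False
      have N: "None \<in> ext_actions (Cw s)" "None \<in> ext_actions Aex" by (auto simp: ext_actions_def)
      have "M 1 r None \<le> 1" "M 1 r' None \<le> 1" using pol_bounds[OF M _ N(2), of _ 1] rA by auto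
      then have "lbv (ext_actions (Cl s)) (ext_actions (Cw s)) (M 1) \<le> 1" using rr(4) N(1) by fastforce
      then show ?thesis unfolding sum pay1_own[OF av(1)] pay1_own[OF av(2)] using False by auto
    qed
  qed
  have ne: "bg_strategies Aex (Cw ` Sex) \<noteq> {}" using sdef_strat by blast
  have bnd: "\<forall>x\<in>bg_strategies Aex (Cl ` Sex). \<forall>y\<in>bg_strategies Aex (Cw ` Sex). 0 \<le> bg_expected Aex Sex Pex Cl Cw M 1 x y \<and> bg_expected Aex Sex Pex Cl Cw M 1 x y \<le> 1"
    using exp_bounds[OF M CwCl_sub(1), of 1] by blast
  have low: "\<forall>y\<in>bg_strategies Aex (Cw ` Sex). (\<Sum>s\<in>Sex. Pex s * lbv (ext_actions (Cl s)) (ext_actions (Cw s)) (M 1)) \<le> bg_expected Aex Sex Pex Cl Cw M 1 \<sigma> y"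
  proof
    fix y assume y: "y \<in> bg_strategies Aex (Cw ` Sex)"
    have mx: "\<forall>s\<in>Sex. \<sigma> (Cl s) \<in> mixed (ext_actions Aex) \<and> y (Cw s) \<in> mixed (ext_actions Aex)"
      using strat_mixed[OF \<sigma>(1)] strat_mixed[OF y] by blast
    show "(\<Sum>s\<in>Sex. Pex s * lbv (ext_actions (Cl s)) (ext_actions (Cw s)) (M 1)) \<le> bg_expected Aex Sex Pex Cl Cw M 1 \<sigma> y"
      by (rule exp_ge2[where c = "\<lambda>s. lbv (ext_actions (Cl s)) (ext_actions (Cw s)) (M 1)", OF mx per])
  qed
  show ?thesis unfolding eq
    by (rule supinf_ge[where hi=1 and lo=0 and f = "\<lambda>x y. bg_expected Aex Sex Pex Cl Cw M 1 x y", OF \<sigma>(1) ne])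
       (use bnd low in auto)
qed
lemma v2_lb:
  assumes M: "M \<in> policies Aex Aex"
  shows "(\<Sum>s\<in>Sex. Pex s * lbv (ext_actions (Cl s)) (ext_actions (Cw s)) (\<lambda>y x. M 2 x y)) \<le> bg_value Aex Sex Pex Cw Cl M 2"
proof -
  obtain \<sigma> where \<sigma>: "\<sigma> \<in> bg_strategies Aex (Cl ` Sex)"
    "\<forall>s\<in>Sex. \<exists>r r'. \<sigma> (Cl s) = pr2 r r' \<and> r \<in> ext_actions (Cl s) \<and> r' \<in> ext_actions (Cl s) \<and>
        (\<forall>c\<in>ext_actions (Cw s). lbv (ext_actions (Cl s)) (ext_actions (Cw s)) (\<lambda>y x. M 2 x y) \<le> (M 2 c r + M 2 c r')/2)"
    using v_lb[of "\<lambda>y x. M 2 x y"] by blast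
  have eq: "bg_value Aex Sex Pex Cw Cl M 2 = (SUP \<sigma>2\<in>bg_strategies Aex (Cl ` Sex). INF \<sigma>1\<in>bg_strategies Aex (Cw ` Sex). bg_expected Aex Sex Pex Cw Cl M 2 \<sigma>1 \<sigma>2)"
    by (simp add: bg_value_def)
  have per: "\<forall>s\<in>Sex. \<forall>a1\<in>ext_actions Aex. lbv (ext_actions (Cl s)) (ext_actions (Cw s)) (\<lambda>y x. M 2 x y) \<le> (\<Sum>a2\<in>ext_actions Aex. \<sigma> (Cl s) a2 * bg_payoff M 2 (Cw s) (Cl s) a1 a2)"
  proof (intro ballI)
    fix s a1 assume s: "s \<in> Sex" and a1: "a1 \<in> ext_actions Aex"
    obtain r r' where rr: "\<sigma> (Cl s) = pr2 r r'" "r \<in> ext_actions (Cl s)" "r' \<in> ext_actions (Cl s)"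
      "\<forall>c\<in>ext_actions (Cw s). lbv (ext_actions (Cl s)) (ext_actions (Cw s)) (\<lambda>y x. M 2 x y) \<le> (M 2 c r + M 2 c r')/2"
      using \<sigma>(2) s by blast
    have rA: "r \<in> ext_actions Aex" "r' \<in> ext_actions Aex" using rr(2,3) ext_mono[OF Cl_sub[OF s]] by auto
    have sum: "(\<Sum>a2\<in>ext_actions Aex. \<sigma> (Cl s) a2 * bg_payoff M 2 (Cw s) (Cl s) a1 a2)
        = (bg_payoff M 2 (Cw s) (Cl s) a1 r + bg_payoff M 2 (Cw s) (Cl s) a1 r') / 2"
      unfolding rr(1) by (rule sum_pr2[OF extA_fin rA])
    have av: "available (Cl s) r" "available (Cl s) r'" using rr(2,3) by (auto simp: available_def)
    show "lbv (ext_actions (Cl s)) (ext_actions (Cw s)) (\<lambda>y x. M 2 x y) \<le> (\<Sum>a2\<in>ext_actions Aex. \<sigma> (Cl s) a2 * bg_payoff M 2 (Cw s) (Cl s) a1 a2)"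
    proof (cases "available (Cw s) a1")
      case True
      then have "a1 \<in> ext_actions (Cw s)" by (simp add: available_def)
      then show ?thesis using rr(4) unfolding sum pay2_own[OF av(1)] pay2_own[OF av(2)] using True by auto
    next
      case False
      have N: "None \<in> ext_actions (Cw s)" "None \<in> ext_actions Aex" by (auto simp: ext_actions_def)
      have "M 2 None r \<le> 1" "M 2 None r' \<le> 1" using pol_bounds[OF M N(2), of _ 2] rA by auto
      then have "lbv (ext_actions (Cl s)) (ext_actions (Cw s)) (\<lambda>y x. M 2 x y) \<le> 1" using rr(4) N(1) by fastforce
      then show ?thesis unfolding sum pay2_own[OF av(1)] pay2_own[OF av(2)] using False by auto
    qed
  qed
  have ne: "bg_strategies Aex (Cw ` Sex) \<noteq> {}" using sdef_strat by blast
  have bnd: "\<forall>x\<in>bg_strategies Aex (Cl ` Sex). \<forall>y\<in>bg_strategies Aex (Cw ` Sex). 0 \<le> bg_expected Aex Sex Pex Cw Cl M 2 y x \<and> bg_expected Aex Sex Pex Cw Cl M 2 y x \<le> 1"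
    using exp_bounds[OF M CwCl_sub(2), of 2] by blast
  have low: "\<forall>y\<in>bg_strategies Aex (Cw ` Sex). (\<Sum>s\<in>Sex. Pex s * lbv (ext_actions (Cl s)) (ext_actions (Cw s)) (\<lambda>y x. M 2 x y)) \<le> bg_expected Aex Sex Pex Cw Cl M 2 y \<sigma>"
  proof
    fix y assume y: "y \<in> bg_strategies Aex (Cw ` Sex)"
    have mx: "\<forall>s\<in>Sex. y (Cw s) \<in> mixed (ext_actions Aex) \<and> \<sigma> (Cl s) \<in> mixed (ext_actions Aex)"
      using strat_mixed[OF \<sigma>(1)] strat_mixed[OF y] by blast
    show "(\<Sum>s\<in>Sex. Pex s * lbv (ext_actions (Cl s)) (ext_actions (Cw s)) (\<lambda>y x. M 2 x y)) \<le> bg_expected Aex Sex Pex Cw Cl M 2 y \<sigma>"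
      by (rule exp_ge[where c = "\<lambda>s. lbv (ext_actions (Cl s)) (ext_actions (Cw s)) (\<lambda>y x. M 2 x y)", OF mx per])
  qed
  show ?thesis unfolding eq
    by (rule supinf_ge[where hi=1 and lo=0 and f = "\<lambda>x y. bg_expected Aex Sex Pex Cw Cl M 2 y x", OF \<sigma>(1) ne])
       (use bnd low in auto)
qed

lemma piddg_lb:
  assumes M: "M \<in> policies Aex Aex"
  shows "lbexp M \<le> piddg_err Aex Sex Pex Cw Cl M"
proof -
  have "lbexp M = ((\<Sum>s\<in>Sex. Pex s * lbv (ext_actions (Cl s)) (ext_actions (Cw s)) (M 1))
      + (\<Sum>s\<in>Sex. Pex s * lbv (ext_actions (Cl s)) (ext_actions (Cw s)) (\<lambda>y x. M 2 x y))) / 2"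
    unfolding lbexp_def sum.distrib[symmetric] sum_divide_distrib by (rule sum.cong) (simp_all add: field_simps)
  then show ?thesis unfolding piddg_err_def using v1_lb[OF M] v2_lb[OF M] by simp
qed

definition Mdet :: "nat \<Rightarrow> nat option \<Rightarrow> nat option \<Rightarrow> real" where
  "Mdet i x y = (if i = 1 \<and> x \<in> ext_actions Aex \<and> y \<in> ext_actions Aex then 1 else 0)"

lemma Mdet_det: "Mdet \<in> det_policies Aex Aex"
  unfolding det_policies_def policies_def Mdet_def by auto

lemma inf_gap:
  fixes E :: "(nat \<Rightarrow> nat option \<Rightarrow> nat option \<Rightarrow> real) \<Rightarrow> real"
  assumes "\<forall>M\<in>policies Aex Aex. 0 \<le> E M" "E Mst \<le> 29/60" "\<forall>M\<in>det_policies Aex Aex. 1/2 \<le> E M"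
  shows "(INF M\<in>policies Aex Aex. E M) < (INF M\<in>det_policies Aex Aex. E M)"
proof -
  have "(INF M\<in>policies Aex Aex. E M) \<le> E Mst"
    using assms(1) by (intro cINF_lower[OF _ Mst_pol]) (auto intro!: bdd_belowI2)
  also have "\<dots> < 1/2" using assms(2) by simp
  also have "1/2 \<le> (INF M\<in>det_policies Aex Aex. E M)"
    using assms(3) Mdet_det by (intro cINF_greatest) auto
  finally show ?thesis .
qed

lemma det_pol: "M \<in> det_policies Aex Aex \<Longrightarrow> M \<in> policies Aex Aex"
  by (simp add: det_policies_def)

lemma errexp_gap: "(INF M\<in>policies Aex Aex. errexp M) < (INF M\<in>det_policies Aex Aex. errexp M)"
proof (rule inf_gap)
  show "\<forall>M\<in>policies Aex Aex. 0 \<le> errexp M" using errexp_nonneg by blast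
  show "errexp Mst \<le> 29/60" by (rule errexp_Mst)
  show "\<forall>M\<in>det_policies Aex Aex. 1/2 \<le> errexp M"
  proof
    fix M assume M: "M \<in> det_policies Aex Aex"
    have "1/2 \<le> lbexp M" by (rule lbexp_det[OF M])
    also have "\<dots> \<le> errexp M" by (rule errexp_lbexp[OF det_pol[OF M]])
    finally show "1/2 \<le> errexp M" .
  qed
qed

lemma piddg_gap: "(INF M\<in>policies Aex Aex. piddg_err Aex Sex Pex Cw Cl M) < (INF M\<in>det_policies Aex Aex. piddg_err Aex Sex Pex Cw Cl M)"
proof (rule inf_gap)
  show "\<forall>M\<in>policies Aex Aex. 0 \<le> piddg_err Aex Sex Pex Cw Cl M" using piddg_nonneg by blast
  show "piddg_err Aex Sex Pex Cw Cl Mst \<le> 29/60" by (rule piddg_Mst)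
  show "\<forall>M\<in>det_policies Aex Aex. 1/2 \<le> piddg_err Aex Sex Pex Cw Cl M"
  proof
    fix M assume M: "M \<in> det_policies Aex Aex"
    have "1/2 \<le> lbexp M" by (rule lbexp_det[OF M])
    also have "\<dots> \<le> piddg_err Aex Sex Pex Cw Cl M" by (rule piddg_lb[OF det_pol[OF M]])
    finally show "1/2 \<le> piddg_err Aex Sex Pex Cw Cl M" .
  qed
qed

lemma ckdg_gap: "(INF M\<in>policies Aex Aex. ckdg_err {0..<6} Pn C1n C2n un M) < (INF M\<in>det_policies Aex Aex. ckdg_err {0..<6} Pn C1n C2n un M)"
  unfolding ckdg_eq by (rule errexp_gap)

lemma ckddg_gap: "(INF M\<in>policies Aex Aex. ckddg_err Sex Pex Cw Cl M) < (INF M\<in>det_policies Aex Aex. ckddg_err Sex Pex Cw Cl M)"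
  unfolding ckddg_eq by (rule errexp_gap)

lemma is_ckdg_ex: "is_ckdg Aex Aex {0..<6} Pn C1n C2n un"
  unfolding is_ckdg_def is_pmf_on_def six
  by (auto simp: Aex_def Pn_def Pex_def C1n_def C2n_def Cw_def Cl_def)

lemma is_ckddg_ex: "is_ckddg Aex Sex Pex Cw Cl"
  unfolding is_ckddg_def using Pex_pmf CwCl_sub by (auto simp: Aex_def Sex_def)

lemma is_piddg_ex: "is_piddg Aex Sex Pex Cw Cl"
  unfolding is_piddg_def using Pex_pmf CwCl_sub by (auto simp: Aex_def Sex_def)

theorem proposition3p6:
  shows "(\<exists>(A1::nat set) (A2::nat set) (S::nat set) P C1 C2 u.
            is_ckdg A1 A2 S P C1 C2 u \<and>
            (INF M \<in> policies A1 A2. ckdg_err S P C1 C2 u M)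
              < (INF M \<in> det_policies A1 A2. ckdg_err S P C1 C2 u M)) \<and>
         (\<exists>(A::nat set) (S::nat set) P Cw Cl.
            is_ckddg A S P Cw Cl \<and>
            (INF M \<in> policies A A. ckddg_err S P Cw Cl M)
              < (INF M \<in> det_policies A A. ckddg_err S P Cw Cl M)) \<and>
         (\<exists>(A::nat set) (S::nat set) P Cw Cl.
            is_piddg A S P Cw Cl \<and>
            (INF M \<in> policies A A. piddg_err A S P Cw Cl M)
              < (INF M \<in> det_policies A A. piddg_err A S P Cw Cl M))"
proof (intro conjI)
  show "\<exists>(A1::nat set) (A2::nat set) (S::nat set) P C1 C2 u.
            is_ckdg A1 A2 S P C1 C2 u \<and>
            (INF M \<in> policies A1 A2. ckdg_err S P C1 C2 u M)
              < (INF M \<in> det_policies A1 A2. ckdg_err S P C1 C2 u M)"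
    using is_ckdg_ex ckdg_gap by blast
  show "\<exists>(A::nat set) (S::nat set) P Cw Cl.
            is_ckddg A S P Cw Cl \<and>
            (INF M \<in> policies A A. ckddg_err S P Cw Cl M)
              < (INF M \<in> det_policies A A. ckddg_err S P Cw Cl M)"
    using is_ckddg_ex ckddg_gap by blast
  show "\<exists>(A::nat set) (S::nat set) P Cw Cl.
            is_piddg A S P Cw Cl \<and>
            (INF M \<in> policies A A. piddg_err A S P Cw Cl M)
              < (INF M \<in> det_policies A A. piddg_err A S P Cw Cl M)"
    using is_piddg_ex piddg_gap by blast
qed

end
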